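(* Let $R$ be a noncommutative division algebra over a field $F$. Then for every positive integer $n$ there exist elements $\alpha,\beta\in R$ such that $(\alpha\beta)^n\neq(\beta\alpha)^n$. *)

theory Defs
  imports Main
begin

definition algebra_over :: "('f::field \<Rightarrow> 'a::ring_1 \<Rightarrow> 'a) \<Rightarrow> bool" where
  "algebra_over smul \<longleftrightarrow>
     (\<forall>c x y. smul c (x + y) = smul c x + smul c y) \<and>
     (\<forall>c d x. smul (c + d) x = smul c x + smul d x) \<and>
     (\<forall>c d x. smul (c * d) x = smul c (smul d x)) \<and>
     (\<forall>x. smul 1 x = x) \<and>
     (\<forall>c x y. smul c x * y = smul c (x * y)) \<and>
     (\<forall>c x y. x * smul c y = smul c (x * y))"

end

theory Submission
  imports Defs "HOL-Computational_Algebra.Computational_Algebra" "HOL-Algebra.FiniteProduct"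
begin


lemma fermat_sub:
  fixes A :: "'a::division_ring set"
  assumes fin: "finite A" and one: "1 \<in> A" and mul: "\<And>x y. x \<in> A \<Longrightarrow> y \<in> A \<Longrightarrow> x * y \<in> A"
    and comm: "\<And>x y. x \<in> A \<Longrightarrow> y \<in> A \<Longrightarrow> x * y = y * x"
    and z: "0 \<notin> A" and inv: "\<And>x. x \<in> A \<Longrightarrow> inverse x \<in> A"
    and x: "x \<in> A"
  shows "x ^ card A = 1"
proof -
  define G where "G = \<lparr>carrier = A, monoid.mult = (*), one = (1::'a)\<rparr>"
  have cg: "comm_group G"
  proof (rule comm_groupI)
    fix x assume "x \<in> carrier G"
    then show "\<exists>y\<in>carrier G. y \<otimes>\<^bsub>G\<^esub> x = \<one>\<^bsub>G\<^esub>"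
      using inv z by (intro bexI[of _ "inverse x"]) (auto simp: G_def intro!: left_inverse)
  qed (auto simp: G_def mul one comm mult.assoc)
  have pw: "y [^]\<^bsub>G\<^esub> (k::nat) = y ^ k" for y k
    by (induction k) (auto simp: G_def power_commutes)
  show ?thesis using comm_group.power_order_eq_one[OF cg] fin x pw by (simp add: G_def)
qed


definition prim_roots :: "nat \<Rightarrow> complex set" where
  "prim_roots d = {z. z ^ d = 1 \<and> (\<forall>k. 0 < k \<and> k < d \<longrightarrow> z ^ k \<noteq> 1)}"

definition cyc :: "nat \<Rightarrow> complex poly" where
  "cyc d = (\<Prod>z\<in>prim_roots d. [:-z, 1:])"

lemma finite_prim_roots: "0 < d \<Longrightarrow> finite (prim_roots d)"
  by (rule finite_subset[OF _ finite_roots_unity[of d]]) (auto simp: prim_roots_def)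

lemma roots_unity_union:
  assumes m: "0 < m"
  shows "{z::complex. z ^ m = 1} = (\<Union>d\<in>{d. d dvd m}. prim_roots d)"
proof (intro equalityI subsetI)
  fix z :: complex assume "z \<in> {z. z ^ m = 1}"
  hence zm: "z ^ m = 1" by simp
  define d where "d = (LEAST k. 0 < k \<and> z ^ k = 1)"
  have ex: "0 < m \<and> z ^ m = 1" using m zm by simp
  have d1: "0 < d \<and> z ^ d = 1" unfolding d_def by (rule LeastI[of _ m]) (use ex in auto)
  have dmin: "\<And>k. 0 < k \<and> z ^ k = 1 \<Longrightarrow> d \<le> k" unfolding d_def by (rule Least_le)
  have "z ^ (m mod d) = 1"
  proof -
    have "z ^ m = z ^ (d * (m div d) + m mod d)" by simp
    also have "\<dots> = (z ^ d) ^ (m div d) * z ^ (m mod d)" by (simp only: power_add power_mult)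
    finally show ?thesis using zm d1 by simp
  qed
  moreover have "m mod d < d" using d1 by simp
  ultimately have "m mod d = 0" using dmin by (metis not_less neq0_conv)
  hence "d dvd m" by (simp add: mod_eq_0_iff_dvd)
  moreover have "z \<in> prim_roots d"
    unfolding prim_roots_def
  proof (intro CollectI conjI allI impI)
    show "z ^ d = 1" using d1 by simp
    fix k assume "0 < k \<and> k < d"
    thus "z ^ k \<noteq> 1" using dmin[of k] by auto
  qed
  ultimately show "z \<in> (\<Union>d\<in>{d. d dvd m}. prim_roots d)" by blast
next
  fix z assume "z \<in> (\<Union>d\<in>{d. d dvd m}. prim_roots d)"
  then obtain d where "d dvd m" "z \<in> prim_roots d" by blast
  then obtain k where "m = d * k" "z ^ d = 1" by (auto simp: prim_roots_def)
  thus "z \<in> {z. z ^ m = 1}" by (simp add: power_mult)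
qed

lemma prim_roots_disjoint:
  assumes "0 < d" "0 < e" "d \<noteq> e"
  shows "prim_roots d \<inter> prim_roots e = {}"
proof (rule ccontr)
  assume "prim_roots d \<inter> prim_roots e \<noteq> {}"
  then obtain z where z: "z \<in> prim_roots d" "z \<in> prim_roots e" by blast
  show False
  proof (cases "d < e")
    case True thus False using z assms by (auto simp: prim_roots_def)
  next
    case False hence "e < d" using assms by simp
    thus False using z assms by (auto simp: prim_roots_def)
  qed
qed

definition xm1 :: "nat \<Rightarrow> complex poly" where
  "xm1 m = monom 1 m - 1"

lemma poly_xm1: "poly (xm1 m) x = x ^ m - 1"
  by (simp add: xm1_def poly_monom)

lemma xm1_decomp:
  assumes m: "0 < m"
  shows "xm1 m = (\<Prod>z\<in>{z. z ^ m = 1}. [:-z, 1:])"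
proof -
  have deg: "degree (xm1 m) = m"
    proof -
    have "xm1 m = monom 1 m + (-1)" by (simp add: xm1_def)
    also have "degree \<dots> = degree (monom (1::complex) m)"
      using m by (intro degree_add_eq_left) (auto simp: degree_monom_eq)
    finally show ?thesis by (simp add: degree_monom_eq)
  qed
  have lc: "lead_coeff (xm1 m) = 1"
    using deg m by (simp add: xm1_def)
  have "xm1 m \<noteq> 0" using lc by auto
  have rs: "rsquarefree (xm1 m)"
  proof (subst rsquarefree_roots, intro allI notI)
    fix a assume a: "poly (xm1 m) a = 0 \<and> poly (pderiv (xm1 m)) a = 0"
    have "pderiv (xm1 m) = monom (of_nat m) (m - 1)"
      by (simp add: xm1_def pderiv_diff pderiv_monom)
    hence "of_nat m * a ^ (m - 1) = 0" using a by (simp add: poly_monom)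
    hence "a = 0" using m by simp
    thus False using a m by (simp add: poly_xm1 power_0_left)
  qed
  have "smult (lead_coeff (xm1 m)) (\<Prod>z|poly (xm1 m) z = 0. [:-z, 1:]) = xm1 m"
    by (rule complex_poly_decompose_rsquarefree[OF rs])
  moreover have "{z. poly (xm1 m) z = 0} = {z. z ^ m = 1}" by (simp add: poly_xm1)
  ultimately show ?thesis using lc by (metis smult_1_left)
qed

lemma xm1_cyc:
  assumes m: "0 < m"
  shows "xm1 m = (\<Prod>d\<in>{d. d dvd m}. cyc d)"
proof -
  have fin: "finite {d. d dvd m}" using m by simp
  have "xm1 m = (\<Prod>z\<in>(\<Union>d\<in>{d. d dvd m}. prim_roots d). [:-z, 1:])"
    using xm1_decomp[OF m] roots_unity_union[OF m] by simp
  also have "\<dots> = (\<Prod>d\<in>{d. d dvd m}. cyc d)"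
    unfolding cyc_def
  proof (rule prod.UNION_disjoint[OF fin])
    show "\<forall>i\<in>{d. d dvd m}. finite (prim_roots i)"
      using m by (auto intro!: finite_prim_roots dest: dvd_imp_le intro: Nat.gr0I)
    show "\<forall>i\<in>{d. d dvd m}. \<forall>j\<in>{d. d dvd m}. i \<noteq> j \<longrightarrow> prim_roots i \<inter> prim_roots j = {}"
    proof (intro ballI impI)
      fix i j assume "i \<in> {d. d dvd m}" "j \<in> {d. d dvd m}" "i \<noteq> j"
      moreover have "\<And>k. k dvd m \<Longrightarrow> 0 < k" using m by (auto intro: Nat.gr0I)
      ultimately show "prim_roots i \<inter> prim_roots j = {}" by (intro prim_roots_disjoint) auto
    qed
  qed
  finally show ?thesis .
qed



definition ip :: "complex poly \<Rightarrow> bool" where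
  "ip p \<longleftrightarrow> (\<forall>i. coeff p i \<in> \<int>)"

lemma ip_mult: "ip p \<Longrightarrow> ip q \<Longrightarrow> ip (p * q)"
  unfolding ip_def coeff_mult by (auto intro!: Ints_sum Ints_mult)

lemma ip_diff: "ip p \<Longrightarrow> ip q \<Longrightarrow> ip (p - q)"
  unfolding ip_def by (auto intro!: Ints_diff)

lemma ip_add: "ip p \<Longrightarrow> ip q \<Longrightarrow> ip (p + q)"
  unfolding ip_def by (auto intro!: Ints_add)

lemma ip_monom: "c \<in> \<int> \<Longrightarrow> ip (monom c k)"
  unfolding ip_def by auto

lemma ip_prod: "(\<And>x. x \<in> A \<Longrightarrow> ip (f x)) \<Longrightarrow> ip (\<Prod>x\<in>A. f x)"
proof (induction A rule: infinite_finite_induct)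
  case (infinite A) thus ?case by (simp add: ip_def)
next
  case empty thus ?case by (simp add: ip_def)
next
  case (insert x F) thus ?case by (simp add: ip_mult)
qed

lemma ip_div_aux:
  assumes G: "ip G" "lead_coeff G = 1"
  shows "\<forall>H. degree H \<le> k \<longrightarrow> ip (G * H) \<longrightarrow> ip H"
proof (induction k)
  case 0
  show ?case
  proof (intro allI impI)
    fix H :: "complex poly" assume "degree H \<le> 0" "ip (G * H)"
    then obtain c where H: "H = [:c:]" by (metis le_zero_eq degree_eq_zeroE)
    have "coeff (G * H) (degree G) = c" using G by (simp add: H)
    hence "c \<in> \<int>" using \<open>ip (G * H)\<close> by (metis ip_def)
    thus "ip H" by (simp add: H ip_def coeff_pCons split: nat.splits)
  qed
next
  case (Suc k)
  show ?case
  proof (intro allI impI)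
    fix H :: "complex poly" assume dH: "degree H \<le> Suc k" and iF: "ip (G * H)"
    define c where "c = coeff H (Suc k)"
    have G0: "G \<noteq> 0" using G by auto
    have "coeff (G * H) (degree G + Suc k) = c"
    proof (cases "degree H = Suc k")
      case True
      have "coeff (G * H) (degree G + degree H) = coeff G (degree G) * coeff H (degree H)"
        by (rule coeff_mult_degree_sum)
      thus ?thesis using G True by (simp add: c_def)
    next
      case False
      hence "degree H < Suc k" using dH by simp
      hence c0: "c = 0" by (simp add: c_def coeff_eq_0)
      have "degree (G * H) \<le> degree G + degree H" by (rule degree_mult_le)
      hence "coeff (G * H) (degree G + Suc k) = 0"
        using \<open>degree H < Suc k\<close> by (intro coeff_eq_0) simp
      thus ?thesis using c0 by simp
    qed
    hence cI: "c \<in> \<int>" using iF by (metis ip_def)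
    define H' where "H' = H - monom c (Suc k)"
    have "degree H' \<le> k"
    proof (rule degree_le, intro allI impI)
      fix i assume "k < i"
      show "coeff H' i = 0"
      proof (cases "i = Suc k")
        case True thus ?thesis by (simp add: H'_def c_def)
      next
        case False
        hence "Suc k < i" using \<open>k < i\<close> by simp
        thus ?thesis using dH by (simp add: H'_def coeff_eq_0)
      qed
    qed
    moreover have "ip (G * H')"
      unfolding H'_def right_diff_distrib by (rule ip_diff[OF iF ip_mult[OF G(1) ip_monom[OF cI]]])
    ultimately have "ip H'" using Suc.IH by blast
    hence "ip (H' + monom c (Suc k))" using cI by (intro ip_add ip_monom)
    thus "ip H" by (simp add: H'_def)
  qed
qed

lemma ip_div:
  assumes "ip G" "lead_coeff G = 1" "ip (G * H)"
  shows "ip H"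
  using ip_div_aux[OF assms(1,2), of "degree H"] assms(3) by blast

lemma cyc_monic: "lead_coeff (cyc d) = 1"
  unfolding cyc_def lead_coeff_prod by simp

lemma cyc_ip: "0 < d \<Longrightarrow> ip (cyc d)"
proof (induction d rule: less_induct)
  case (less d)
  define G where "G = (\<Prod>e\<in>{e. e dvd d} - {d}. cyc e)"
  have fin: "finite {e. e dvd d}" using less.prems by simp
  have "xm1 d = cyc d * G"
    unfolding xm1_cyc[OF less.prems] G_def using fin
    by (subst prod.remove[of _ d]) auto
  moreover have "ip (xm1 d)" unfolding xm1_def ip_def by auto
  moreover have "ip G" unfolding G_def
  proof (rule ip_prod)
    fix e assume e: "e \<in> {e. e dvd d} - {d}"
    hence "0 < e" using less.prems by (auto intro: Nat.gr0I)
    moreover have "e < d" using e less.prems by (auto dest: dvd_imp_le)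
    ultimately show "ip (cyc e)" using less.IH by blast
  qed
  moreover have "lead_coeff G = 1" unfolding G_def lead_coeff_prod by (simp add: cyc_monic)
  ultimately show "ip (cyc d)" using ip_div[of G "cyc d"] by (simp add: mult.commute)
qed

lemma poly_ip_Ints: "ip p \<Longrightarrow> x \<in> \<int> \<Longrightarrow> poly p x \<in> \<int>"
  unfolding poly_altdef ip_def by (auto intro!: Ints_sum Ints_mult Ints_power)



lemma cyc_val_Ints: "0 < d \<Longrightarrow> poly (cyc d) (of_nat q) \<in> \<int>"
  by (intro poly_ip_Ints cyc_ip) auto

lemma xm1_val: "0 < m \<Longrightarrow> (of_nat q :: complex) ^ m - 1 = (\<Prod>e\<in>{e. e dvd m}. poly (cyc e) (of_nat q))"
  using arg_cong[OF xm1_cyc, of m "\<lambda>p. poly p (of_nat q)"] by (simp add: poly_xm1 poly_prod)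

lemma cyc_val_dvd:
  assumes d: "0 < d" "d dvd m" "d < m"
  shows "\<exists>R\<in>\<int>. (of_nat q :: complex) ^ m - 1 = ((of_nat q) ^ d - 1) * poly (cyc m) (of_nat q) * R"
proof -
  have m: "0 < m" using d by simp
  define V where "V e = poly (cyc e) (of_nat q :: complex)" for e
  define A where "A = {e. e dvd d}"
  define B where "B = {e. e dvd m}"
  have AB: "A \<subseteq> B" using d by (auto simp: A_def B_def intro: dvd_trans)
  have fB: "finite B" using m by (simp add: B_def)
  have mB: "m \<in> B - A" using d by (auto simp: A_def B_def dest: dvd_imp_le)
  have "(\<Prod>e\<in>B. V e) = (\<Prod>e\<in>B - A. V e) * (\<Prod>e\<in>A. V e)"
    by (rule prod.subset_diff[OF AB fB])
  also have "(\<Prod>e\<in>B - A. V e) = V m * (\<Prod>e\<in>B - A - {m}. V e)"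
    using fB mB by (subst prod.remove[of _ m]) auto
  also have "(\<Prod>e\<in>A. V e) = (of_nat q) ^ d - 1"
    using xm1_val[OF d(1), of q] by (simp add: A_def V_def)
  finally have eq: "(\<Prod>e\<in>B. V e) = ((of_nat q) ^ d - 1) * V m * (\<Prod>e\<in>B - A - {m}. V e)"
    by (simp add: mult_ac)
  have "(\<Prod>e\<in>B - A - {m}. V e) \<in> \<int>"
  proof (rule Ints_prod)
    fix e assume "e \<in> B - A - {m}"
    hence "0 < e" using m by (auto simp: B_def intro: Nat.gr0I)
    thus "V e \<in> \<int>" by (simp add: V_def cyc_val_Ints)
  qed
  moreover have "(of_nat q :: complex) ^ m - 1 = (\<Prod>e\<in>B. V e)"
    using xm1_val[OF m, of q] by (simp add: B_def V_def)
  ultimately show ?thesis using eq by (auto simp: V_def)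
qed

lemma cyc_val_dvd_self:
  assumes m: "0 < m"
  shows "\<exists>R\<in>\<int>. (of_nat q :: complex) ^ m - 1 = poly (cyc m) (of_nat q) * R"
proof -
  define V where "V e = poly (cyc e) (of_nat q :: complex)" for e
  define B where "B = {e. e dvd m}"
  have fB: "finite B" using m by (simp add: B_def)
  have "(\<Prod>e\<in>B. V e) = V m * (\<Prod>e\<in>B - {m}. V e)"
    using fB by (subst prod.remove[of _ m]) (auto simp: B_def)
  moreover have "(\<Prod>e\<in>B - {m}. V e) \<in> \<int>"
  proof (rule Ints_prod)
    fix e assume "e \<in> B - {m}"
    hence "0 < e" using m by (auto simp: B_def intro: Nat.gr0I)
    thus "V e \<in> \<int>" by (simp add: V_def cyc_val_Ints)
  qed
  moreover have "(of_nat q :: complex) ^ m - 1 = (\<Prod>e\<in>B. V e)"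
    using xm1_val[OF m, of q] by (simp add: B_def V_def)
  ultimately show ?thesis by (auto simp: V_def)
qed

lemma prod_gt_const:
  fixes f :: "'b \<Rightarrow> real"
  assumes "finite A" "A \<noteq> {}" "\<And>a. a \<in> A \<Longrightarrow> f a > c" "c \<ge> 1"
  shows "(\<Prod>a\<in>A. f a) > c"
  using assms
proof (induction A rule: finite_ne_induct)
  case (singleton x) thus ?case by simp
next
  case (insert x F)
  have "f x > c" "(\<Prod>a\<in>F. f a) > c" using insert by auto
  hence "f x * (\<Prod>a\<in>F. f a) \<ge> f x * 1" using insert.prems(2) by (intro mult_left_mono) auto
  moreover have "(\<Prod>a\<in>insert x F. f a) = f x * (\<Prod>a\<in>F. f a)" using insert by simp
  ultimately show ?case using \<open>f x > c\<close> by linarith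
qed

lemma cyc_val_big:
  assumes m: "2 \<le> m" and q: "2 \<le> q"
  shows "norm (poly (cyc m) (of_nat q :: complex)) > real q - 1"
proof -
  have "norm (poly (cyc m) (of_nat q :: complex)) = (\<Prod>z\<in>prim_roots m. norm (of_nat q - z))"
    unfolding cyc_def poly_prod by (simp add: prod_norm)
  also have "\<dots> > real q - 1"
  proof (rule prod_gt_const)
    show "finite (prim_roots m)" using m by (intro finite_prim_roots) simp
    define w where "w = cis (2 * pi * real 1 / real m)"
    have bij: "bij_betw (\<lambda>k. cis (2 * pi * real k / real m)) {..<m} {z. z ^ m = 1}"
      using m by (intro bij_betw_roots_unity) simp
    have "w \<in> prim_roots m"
      unfolding prim_roots_def
    proof (intro CollectI conjI allI impI)
      have "w \<in> (\<lambda>k. cis (2 * pi * real k / real m)) ` {..<m}"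
        unfolding w_def by (rule imageI) (use m in simp)
      thus "w ^ m = 1" using bij unfolding bij_betw_def by auto
      fix k assume k: "0 < k \<and> k < m"
      have "w ^ k = cis (2 * pi * real k / real m)" by (simp add: w_def DeMoivre mult_ac)
      moreover have "cis (2 * pi * real k / real m) \<noteq> cis (2 * pi * real 0 / real m)"
        using bij k m unfolding bij_betw_def inj_on_def by (metis lessThan_iff less_imp_le_nat not_gr0 order.strict_trans1 less_le_not_le)
      ultimately show "w ^ k \<noteq> 1" by simp
    qed
    thus "prim_roots m \<noteq> {}" by blast
  next
    fix z assume z: "z \<in> prim_roots m"
    hence z1: "z \<noteq> 1" using m by (auto simp: prim_roots_def)
    have "z ^ m = 1" using z by (simp add: prim_roots_def)
    hence "norm z ^ m = 1" by (metis norm_one norm_power)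
    hence nz: "norm z = 1" using power_eq_imp_eq_base[of "norm z" m 1] m by simp
    have "Re z < 1"
    proof (rule ccontr)
      assume "\<not> Re z < 1"
      moreover have "Re z \<le> 1" using nz complex_Re_le_cmod[of z] by simp
      ultimately have "Re z = 1" by simp
      moreover have "(Re z)\<^sup>2 + (Im z)\<^sup>2 = 1" using nz by (metis cmod_power2 power_one)
      ultimately have "Im z = 0" by simp
      thus False using z1 \<open>Re z = 1\<close> by (simp add: complex_eq_iff)
    qed
    have "Re (of_nat q - z) \<le> norm (of_nat q - z)" by (rule complex_Re_le_cmod)
    thus "norm (of_nat q - z) > real q - 1" using \<open>Re z < 1\<close> by simp
  next
    show "real q - 1 \<ge> 1" using q by simp
  qed
  finally show ?thesis .
qed

lemma cyc_key:
  fixes q m :: nat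
  assumes m: "2 \<le> m" and q: "2 \<le> q"
  shows "\<exists>N::int. \<bar>N\<bar> > int q - 1 \<and> N dvd (int q ^ m - 1) \<and>
     (\<forall>d c. d dvd m \<longrightarrow> d < m \<longrightarrow> c * (q ^ d - 1) = q ^ m - 1 \<longrightarrow> N dvd int c)"
proof -
  define V where "V = poly (cyc m) (of_nat q :: complex)"
  have "V \<in> \<int>" using m by (simp add: V_def cyc_val_Ints)
  then obtain N where N: "V = of_int N" by (auto elim: Ints_cases)
  have big: "\<bar>N\<bar> > int q - 1"
  proof -
    have "norm V > real q - 1" using cyc_val_big[OF m q] by (simp add: V_def)
    hence "real_of_int \<bar>N\<bar> > real q - 1" using N by simp
    thus ?thesis by linarith
  qed
  have d1: "N dvd (int q ^ m - 1)"
  proof -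
    obtain R where R: "R \<in> \<int>" "(of_nat q :: complex) ^ m - 1 = V * R"
      using cyc_val_dvd_self[of m q] m by (auto simp: V_def)
    obtain r where r: "R = of_int r" using R(1) by (auto elim: Ints_cases)
    have "(of_int (int q ^ m - 1) :: complex) = of_int (N * r)" using R(2) N r by simp
    hence "int q ^ m - 1 = N * r" by (simp only: of_int_eq_iff)
    thus ?thesis by simp
  qed
  have d2: "N dvd int c" if dc: "d dvd m" "d < m" "c * (q ^ d - 1) = q ^ m - 1" for d c
  proof -
    have d0: "0 < d" using dc m by (auto intro: Nat.gr0I)
    obtain R where R: "R \<in> \<int>" "(of_nat q :: complex) ^ m - 1 = ((of_nat q) ^ d - 1) * V * R"
      using cyc_val_dvd[OF d0 dc(1,2), of q] by (auto simp: V_def)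
    obtain r where r: "R = of_int r" using R(1) by (auto elim: Ints_cases)
    have qd: "1 \<le> q ^ d" "1 \<le> q ^ m" using q by simp_all
    have "(of_nat (c * (q ^ d - 1)) :: complex) = of_nat (q ^ m - 1)" using dc(3) by simp
    hence "of_nat c * ((of_nat q :: complex) ^ d - 1) = (of_nat q) ^ m - 1"
      using qd by (simp add: of_nat_diff)
    also have "\<dots> = ((of_nat q) ^ d - 1) * (V * R)" using R(2) by (simp add: mult_ac)
    finally have "of_nat c * ((of_nat q :: complex) ^ d - 1) = ((of_nat q) ^ d - 1) * (V * R)" .
    moreover have "(of_nat q :: complex) ^ d - 1 \<noteq> 0"
    proof
      assume "(of_nat q :: complex) ^ d - 1 = 0"
      hence "(of_nat (q ^ d) :: complex) = of_nat 1" by simp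
      hence "q ^ d = 1" by (simp only: of_nat_eq_iff)
      thus False using q d0 by (metis One_nat_def less_not_refl2 one_less_power numeral_le_iff semiring_norm(69) Suc_1 Suc_le_lessD)
    qed
    ultimately have "of_nat c = V * R" by (simp add: mult.commute)
    hence "(of_int (int c) :: complex) = of_int (N * r)" using N r by simp
    hence "int c = N * r" by (simp only: of_int_eq_iff)
    thus ?thesis by simp
  qed
  show ?thesis using big d1 d2 by blast
qed




definition subdiv :: "'a::division_ring set \<Rightarrow> bool" where
  "subdiv S \<longleftrightarrow> 0 \<in> S \<and> 1 \<in> S \<and> (\<forall>x\<in>S. \<forall>y\<in>S. x + y \<in> S) \<and> (\<forall>x\<in>S. \<forall>y\<in>S. x * y \<in> S)
     \<and> (\<forall>x\<in>S. -x \<in> S) \<and> (\<forall>x\<in>S. inverse x \<in> S)"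

definition kmod :: "'a::division_ring set \<Rightarrow> 'a set \<Rightarrow> bool" where
  "kmod K M \<longleftrightarrow> 0 \<in> M \<and> (\<forall>x\<in>M. \<forall>y\<in>M. x + y \<in> M) \<and> (\<forall>k\<in>K. \<forall>x\<in>M. k * x \<in> M)"

lemma kmod_extend:
  fixes K M :: "'a::division_ring set"
  assumes K: "subdiv K" and M: "kmod K M" and v: "v \<notin> M"
  defines "M' \<equiv> (\<lambda>(k, m). k * v + m) ` (K \<times> M)"
  shows "kmod K M'" "M \<subseteq> M'" "v \<in> M'" "finite K \<Longrightarrow> finite M \<Longrightarrow> card M' = card K * card M"
proof -
  have K0: "0 \<in> K" and K1: "1 \<in> K" and Kadd: "\<And>x y. x \<in> K \<Longrightarrow> y \<in> K \<Longrightarrow> x + y \<in> K"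
    and Kmul: "\<And>x y. x \<in> K \<Longrightarrow> y \<in> K \<Longrightarrow> x * y \<in> K" and Kneg: "\<And>x. x \<in> K \<Longrightarrow> -x \<in> K"
    and Kinv: "\<And>x. x \<in> K \<Longrightarrow> inverse x \<in> K" using K unfolding subdiv_def by auto
  have M0: "0 \<in> M" and Madd: "\<And>x y. x \<in> M \<Longrightarrow> y \<in> M \<Longrightarrow> x + y \<in> M"
    and Msc: "\<And>k x. k \<in> K \<Longrightarrow> x \<in> M \<Longrightarrow> k * x \<in> M" using M unfolding kmod_def by auto
  have Mneg: "-x \<in> M" if "x \<in> M" for x
    using Msc[OF Kneg[OF K1] that] by simp
  show "kmod K M'"
    unfolding kmod_def
  proof (intro conjI ballI)
    show "0 \<in> M'" unfolding M'_def using K0 M0 by (intro image_eqI[of _ _ "(0, 0)"]) auto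
  next
    fix x y assume "x \<in> M'" "y \<in> M'"
    then obtain k m k' m' where "k \<in> K" "m \<in> M" "k' \<in> K" "m' \<in> M" "x = k * v + m" "y = k' * v + m'"
      unfolding M'_def by auto
    moreover have "k * v + m + (k' * v + m') = (k + k') * v + (m + m')" by (simp add: algebra_simps)
    ultimately show "x + y \<in> M'" unfolding M'_def
      by (intro image_eqI[of _ _ "(k + k', m + m')"]) (auto intro: Kadd Madd)
  next
    fix c x assume "c \<in> K" "x \<in> M'"
    then obtain k m where "k \<in> K" "m \<in> M" "x = k * v + m" unfolding M'_def by auto
    moreover have "c * (k * v + m) = (c * k) * v + c * m" by (simp add: algebra_simps)
    ultimately show "c * x \<in> M'" unfolding M'_def using \<open>c \<in> K\<close>
      by (intro image_eqI[of _ _ "(c * k, c * m)"]) (auto intro: Kmul Msc)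
  qed
  show "M \<subseteq> M'"
  proof
    fix m assume "m \<in> M"
    thus "m \<in> M'" unfolding M'_def using K0 by (intro image_eqI[of _ _ "(0, m)"]) auto
  qed
  show "v \<in> M'" unfolding M'_def using K1 M0 by (intro image_eqI[of _ _ "(1, 0)"]) auto
  assume fin: "finite K" "finite M"
  have inj: "inj_on (\<lambda>(k, m). k * v + m) (K \<times> M)"
  proof (rule inj_onI, clarify)
    fix k m k' m' assume km: "k \<in> K" "m \<in> M" "k' \<in> K" "m' \<in> M" "k * v + m = k' * v + m'"
    show "k = k' \<and> m = m'"
    proof (cases "k = k'")
      case True thus ?thesis using km by simp
    next
      case False
      have "(k - k') * v = m' + - m" using km(5) by (simp add: algebra_simps)
      moreover have "k - k' \<in> K" using km Kadd Kneg by (metis diff_conv_add_uminus)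
      moreover have "m' + - m \<in> M" using km Madd Mneg by blast
      ultimately have "inverse (k - k') * ((k - k') * v) \<in> M" using Msc Kinv by metis
      moreover have "inverse (k - k') * ((k - k') * v) = v" using False
        by (simp add: mult.assoc[symmetric])
      ultimately show ?thesis using v by simp
    qed
  qed
  show "card M' = card K * card M"
    unfolding M'_def using card_image[OF inj] by (simp add: card_cartesian_product)
qed

lemma subdiv_card_ge2: "subdiv K \<Longrightarrow> finite K \<Longrightarrow> 2 \<le> card K"
proof -
  assume "subdiv K" "finite K"
  hence "{0, 1} \<subseteq> K" by (auto simp: subdiv_def)
  hence "card {0::'a, 1} \<le> card K" using \<open>finite K\<close> by (rule card_mono[rotated])
  thus ?thesis by simp
qed

lemma kmod_card:
  fixes K L :: "'a::division_ring set"
  assumes K: "subdiv K" "finite K" and L: "kmod K L" "finite L"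
  shows "\<exists>d. card L = card K ^ d"
proof -
  have main: "\<And>M. kmod K M \<Longrightarrow> M \<subseteq> L \<Longrightarrow> \<exists>d. card M = card K ^ d \<Longrightarrow> \<exists>d. card L = card K ^ d"
  proof -
    fix M
    show "kmod K M \<Longrightarrow> M \<subseteq> L \<Longrightarrow> \<exists>d. card M = card K ^ d \<Longrightarrow> \<exists>d. card L = card K ^ d"
    proof (induction "card L - card M" arbitrary: M rule: less_induct)
      case (less M)
      show ?case
      proof (cases "M = L")
        case True thus ?thesis using less.prems by simp
      next
        case False
        then obtain v where v: "v \<in> L" "v \<notin> M" using less.prems(2) by blast
        define M' where "M' = (\<lambda>(k, m). k * v + m) ` (K \<times> M)"
        have finM: "finite M" using less.prems(2) L(2) finite_subset by blast
        have M': "kmod K M'" "M \<subseteq> M'" "v \<in> M'" "card M' = card K * card M"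
          using kmod_extend[OF K(1) less.prems(1) v(2)] K(2) finM unfolding M'_def by auto
        have "M' \<subseteq> L"
        proof
          fix y assume "y \<in> M'"
          then obtain k m where "k \<in> K" "m \<in> M" "y = k * v + m" unfolding M'_def by auto
          thus "y \<in> L" using L(1) v(1) less.prems(2) unfolding kmod_def by blast
        qed
        have c1: "card M \<ge> 1" using less.prems(1) finM unfolding kmod_def
          by (metis One_nat_def Suc_leI card_gt_0_iff empty_iff)
        have "card M < card M'" using M'(4) subdiv_card_ge2[OF K] c1 by simp
        moreover have "card M' \<le> card L" using \<open>M' \<subseteq> L\<close> L(2) by (rule card_mono[rotated])
        ultimately have lt: "card L - card M' < card L - card M" by simp
        obtain d where "card M = card K ^ d" using less.prems(3) by blast
        hence "card M' = card K ^ Suc d" using M'(4) by simp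
        thus ?thesis using less.hyps[OF lt M'(1) \<open>M' \<subseteq> L\<close>] by blast
      qed
    qed
  qed
  have "kmod K {0}" by (simp add: kmod_def)
  moreover have "{0} \<subseteq> L" using L(1) by (simp add: kmod_def)
  moreover have "card {0::'a} = card K ^ 0" by simp
  ultimately show ?thesis using main[of "{0}"] by blast
qed



lemma ic1 [simp]: "h \<noteq> 0 \<Longrightarrow> inverse h * (h * z) = (z::'a::division_ring)"
  by (simp add: mult.assoc[symmetric])

lemma ic2 [simp]: "h \<noteq> 0 \<Longrightarrow> h * (inverse h * z) = (z::'a::division_ring)"
  by (simp add: mult.assoc[symmetric])

definition centr :: "'a::division_ring set \<Rightarrow> 'a \<Rightarrow> 'a set" where
  "centr S x = {y \<in> S. x * y = y * x}"

definition orb :: "'a::division_ring set \<Rightarrow> 'a \<Rightarrow> 'a set" where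
  "orb S x = (\<lambda>g. g * x * inverse g) ` (S - {0})"

lemma subdiv_centr:
  assumes S: "subdiv S"
  shows "subdiv (centr S x)"
proof -
  have inv: "x * inverse y = inverse y * x" if "x * y = y * x" for y
  proof (cases "y = 0")
    case False
    have "x * inverse y = inverse y * (y * (x * inverse y))" using False by simp
    also have "y * (x * inverse y) = (y * x) * inverse y" by (simp add: mult.assoc)
    also have "\<dots> = (x * y) * inverse y" using that by simp
    also have "\<dots> = x" using False by (simp add: mult.assoc)
    finally show ?thesis .
  qed simp
  have mul: "x * (a * b) = (a * b) * x" if "x * a = a * x" "x * b = b * x" for a b
  proof -
    have "x * (a * b) = (x * a) * b" by (simp add: mult.assoc)
    also have "\<dots> = a * (x * b)" using that by (simp add: mult.assoc)
    also have "\<dots> = (a * b) * x" using that by (simp add: mult.assoc)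
    finally show ?thesis .
  qed
  have add: "x * (a + b) = (a + b) * x" if "x * a = a * x" "x * b = b * x" for a b
    using that by (simp add: distrib_left distrib_right)
  have neg: "x * (- a) = (- a) * x" if "x * a = a * x" for a
    using that by simp
  have S': "0 \<in> S" "1 \<in> S" "\<And>a b. a \<in> S \<Longrightarrow> b \<in> S \<Longrightarrow> a + b \<in> S"
     "\<And>a b. a \<in> S \<Longrightarrow> b \<in> S \<Longrightarrow> a * b \<in> S" "\<And>a. a \<in> S \<Longrightarrow> - a \<in> S"
     "\<And>a. a \<in> S \<Longrightarrow> inverse a \<in> S" using S unfolding subdiv_def by auto
  show ?thesis unfolding subdiv_def centr_def
  proof (intro conjI ballI)
    show "0 \<in> {y \<in> S. x * y = y * x}" using S' by simp
    show "1 \<in> {y \<in> S. x * y = y * x}" using S' by simp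
  next
    fix a b assume a: "a \<in> {y \<in> S. x * y = y * x}" and b: "b \<in> {y \<in> S. x * y = y * x}"
    show "a + b \<in> {y \<in> S. x * y = y * x}" using a b S'(3) add by blast
    show "a * b \<in> {y \<in> S. x * y = y * x}" using a b S'(4) mul by blast
  next
    fix a assume a: "a \<in> {y \<in> S. x * y = y * x}"
    show "- a \<in> {y \<in> S. x * y = y * x}" using a S'(5) neg by blast
    show "inverse a \<in> {y \<in> S. x * y = y * x}" using a S'(6) inv by blast
  qed
qed

lemma orbit_stab:
  fixes S :: "'a::division_ring set"
  assumes S: "subdiv S" "finite S" and x: "x \<in> S"
  shows "card (S - {0}) = card (orb S x) * card (centr S x - {0})"
proof -
  have Smul: "\<And>a b. a \<in> S \<Longrightarrow> b \<in> S \<Longrightarrow> a * b \<in> S" and Sinv: "\<And>a. a \<in> S \<Longrightarrow> inverse a \<in> S"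
    using S(1) unfolding subdiv_def by auto
  define f where "f g = g * x * inverse g" for g
  define F where "F w = {g \<in> S - {0}. f g = w}" for w
  have U: "S - {0} = (\<Union>w\<in>orb S x. F w)"
    unfolding orb_def F_def f_def by auto
  have fib: "card (F w) = card (centr S x - {0})" if w: "w \<in> orb S x" for w
  proof -
    obtain h where h: "h \<in> S" "h \<noteq> 0" "w = f h" using w unfolding orb_def f_def by auto
    have "F w = (\<lambda>c. h * c) ` (centr S x - {0})"
    proof (intro equalityI subsetI)
      fix g assume g: "g \<in> F w"
      hence g1: "g \<in> S" "g \<noteq> 0" "g * x * inverse g = h * x * inverse h" using h by (auto simp: F_def f_def)
      define c where "c = inverse h * g"
      have "inverse h * (g * x * inverse g) * g = inverse h * (h * x * inverse h) * g" using g1 by simp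
      hence "c * x = x * c" using g1 h by (simp add: c_def mult.assoc)
      moreover have "c \<in> S" "c \<noteq> 0" using g1 h Smul Sinv by (auto simp: c_def)
      moreover have "g = h * c" using h by (simp add: c_def mult.assoc[symmetric])
      ultimately show "g \<in> (\<lambda>c. h * c) ` (centr S x - {0})" unfolding centr_def by auto
    next
      fix g assume "g \<in> (\<lambda>c. h * c) ` (centr S x - {0})"
      then obtain c where c: "c \<in> S" "c \<noteq> 0" "x * c = c * x" "g = h * c" unfolding centr_def by auto
      have "c * x * inverse c = x" using c by (metis mult.assoc right_inverse mult_1_right)
      have "g * x * inverse g = h * (c * x * inverse c) * inverse h"
        using c h by (simp add: nonzero_inverse_mult_distrib mult.assoc)
      hence "f g = w" using h \<open>c * x * inverse c = x\<close> by (simp add: f_def)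
      moreover have "g \<in> S" "g \<noteq> 0" using c h Smul by auto
      ultimately show "g \<in> F w" by (simp add: F_def)
    qed
    moreover have "inj_on (\<lambda>c. h * c) (centr S x - {0})" using h by (auto intro: inj_onI)
    ultimately show ?thesis by (simp add: card_image)
  qed
  have "card (S - {0}) = (\<Sum>w\<in>orb S x. card (F w))"
    unfolding U
  proof (rule card_UN_disjoint)
    show "finite (orb S x)" using S(2) by (simp add: orb_def)
    show "\<forall>i\<in>orb S x. finite (F i)" using S(2) by (simp add: F_def)
    show "\<forall>i\<in>orb S x. \<forall>j\<in>orb S x. i \<noteq> j \<longrightarrow> F i \<inter> F j = {}" by (auto simp: F_def)
  qed
  also have "\<dots> = card (orb S x) * card (centr S x - {0})" using fib by simp
  finally show ?thesis .
qed

lemma orb_trans: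
  fixes S :: "'a::division_ring set"
  assumes S: "subdiv S" and w: "w \<in> orb S x"
  shows "orb S w = orb S x"
proof -
  have Smul: "\<And>a b. a \<in> S \<Longrightarrow> b \<in> S \<Longrightarrow> a * b \<in> S" and Sinv: "\<And>a. a \<in> S \<Longrightarrow> inverse a \<in> S"
    using S unfolding subdiv_def by auto
  obtain h where h: "h \<in> S" "h \<noteq> 0" "w = h * x * inverse h" using w unfolding orb_def by auto
  have xw: "x = inverse h * w * h" using h by (simp add: mult.assoc)
  show ?thesis
  proof (intro equalityI subsetI)
    fix y assume "y \<in> orb S w"
    then obtain g where g: "g \<in> S" "g \<noteq> 0" "y = g * w * inverse g" unfolding orb_def by auto
    have "y = (g * h) * x * inverse (g * h)"
      using g h by (simp add: nonzero_inverse_mult_distrib mult.assoc)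
    moreover have "g * h \<in> S - {0}" using g h Smul by auto
    ultimately show "y \<in> orb S x" unfolding orb_def by blast
  next
    fix y assume "y \<in> orb S x"
    then obtain g where g: "g \<in> S" "g \<noteq> 0" "y = g * x * inverse g" unfolding orb_def by auto
    have "y = (g * inverse h) * w * inverse (g * inverse h)"
      using g h(2) xw by (simp add: nonzero_inverse_mult_distrib mult.assoc)
    moreover have "g * inverse h \<in> S - {0}" using g h Smul Sinv by auto
    ultimately show "y \<in> orb S w" unfolding orb_def by blast
  qed
qed



lemma kmod_sub:
  assumes "subdiv K" "subdiv L" "K \<subseteq> L"
  shows "kmod K L"
proof -
  have "0 \<in> L" "\<And>x y. x \<in> L \<Longrightarrow> y \<in> L \<Longrightarrow> x + y \<in> L" "\<And>x y. x \<in> L \<Longrightarrow> y \<in> L \<Longrightarrow> x * y \<in> L"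
    using assms(2) unfolding subdiv_def by auto
  thus ?thesis unfolding kmod_def using assms(3) by auto
qed

lemma subdiv_Inter:
  assumes "\<And>i. i \<in> I \<Longrightarrow> subdiv (A i)"
  shows "subdiv (\<Inter>i\<in>I. A i)"
  unfolding subdiv_def
proof (intro conjI ballI)
  show "0 \<in> (\<Inter>i\<in>I. A i)" "1 \<in> (\<Inter>i\<in>I. A i)" using assms unfolding subdiv_def by auto
next
  fix x y assume "x \<in> (\<Inter>i\<in>I. A i)" "y \<in> (\<Inter>i\<in>I. A i)"
  thus "x + y \<in> (\<Inter>i\<in>I. A i)" "x * y \<in> (\<Inter>i\<in>I. A i)" using assms unfolding subdiv_def by auto
next
  fix x assume "x \<in> (\<Inter>i\<in>I. A i)"
  thus "- x \<in> (\<Inter>i\<in>I. A i)" "inverse x \<in> (\<Inter>i\<in>I. A i)" using assms unfolding subdiv_def by auto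
qed

theorem wedderburn:
  fixes S :: "'a::division_ring set"
  assumes S: "subdiv S" "finite S"
  shows "\<forall>x\<in>S. \<forall>y\<in>S. x * y = y * x"
proof (rule ccontr)
  assume nc: "\<not> (\<forall>x\<in>S. \<forall>y\<in>S. x * y = y * x)"
  have S0: "0 \<in> S" and Smul: "\<And>a b. a \<in> S \<Longrightarrow> b \<in> S \<Longrightarrow> a * b \<in> S"
    and Sinv: "\<And>a. a \<in> S \<Longrightarrow> inverse a \<in> S" using S(1) unfolding subdiv_def by auto
  define Z where "Z = (\<Inter>y\<in>S. centr S y)"
  have Zmem: "z \<in> Z \<longleftrightarrow> z \<in> S \<and> (\<forall>y\<in>S. y * z = z * y)" for z
    using S0 unfolding Z_def centr_def by auto
  have subZ: "subdiv Z" unfolding Z_def by (rule subdiv_Inter, rule subdiv_centr[OF S(1)])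
  have ZS: "Z \<subseteq> S" using Zmem by auto
  have finZ: "finite Z" using ZS S(2) finite_subset by blast
  define q where "q = card Z"
  have q2: "2 \<le> q" unfolding q_def by (rule subdiv_card_ge2[OF subZ finZ])
  obtain m where m: "card S = q ^ m" using kmod_card[OF subZ finZ kmod_sub[OF subZ S(1) ZS] S(2)] q_def by blast
  from nc obtain a b where ab: "a \<in> S" "b \<in> S" "a * b \<noteq> b * a" by blast
  have aZ: "a \<notin> Z" using ab Zmem by metis
  have "card Z < card S" using ZS aZ ab(1) S(2) by (metis psubsetI psubset_card_mono)
  hence "q ^ 1 < q ^ m" using m q_def by simp
  hence m2: "2 \<le> m" using q2 power_less_imp_less_exp[of q 1 m] by simp
  obtain N where N: "\<bar>N\<bar> > int q - 1" "N dvd (int q ^ m - 1)"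
    "\<And>d c. d dvd m \<Longrightarrow> d < m \<Longrightarrow> c * (q ^ d - 1) = q ^ m - 1 \<Longrightarrow> N dvd int c"
    using cyc_key[OF m2 q2] by blast
  have cS0: "card (S - {0}) = q ^ m - 1" using S0 S(2) m by (simp add: card_Diff_singleton)
  have orbdvd: "N dvd int (card (orb S x))" if x: "x \<in> S" "x \<notin> Z" for x
  proof -
    have subC: "subdiv (centr S x)" by (rule subdiv_centr[OF S(1)])
    have CS: "centr S x \<subseteq> S" by (auto simp: centr_def)
    have ZC: "Z \<subseteq> centr S x" using x(1) Zmem by (auto simp: centr_def)
    have finC: "finite (centr S x)" using CS S(2) finite_subset by blast
    obtain d where d: "card (centr S x) = q ^ d"
      using kmod_card[OF subZ finZ kmod_sub[OF subZ subC ZC] finC] q_def by blast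
    obtain k where k: "card S = card (centr S x) ^ k"
      using kmod_card[OF subC finC kmod_sub[OF subC S(1) CS] S(2)] by blast
    have "q ^ m = q ^ (d * k)" using m d k by (simp add: power_mult)
    hence mdk: "m = d * k" using q2 by (simp add: power_inject_exp)
    have "d \<noteq> m"
    proof
      assume "d = m"
      hence "card (centr S x) = card S" using d m by simp
      hence "centr S x = S" using CS S(2) by (simp add: card_subset_eq)
      hence "\<forall>y\<in>S. y * x = x * y"
      proof (intro ballI)
        fix y assume "centr S x = S" "y \<in> S"
        hence "y \<in> centr S x" by simp
        thus "y * x = x * y" by (simp add: centr_def)
      qed
      thus False using x Zmem by blast
    qed
    moreover have "d \<le> m"
    proof -
      have "card (centr S x) \<le> card S" using CS S(2) by (rule card_mono[rotated])
      hence "q ^ d \<le> q ^ m" using d m by simp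
      thus ?thesis using q2 by (simp add: power_le_imp_le_exp)
    qed
    ultimately have "d < m" by simp
    have C0: "0 \<in> centr S x" using S0 by (simp add: centr_def)
    have "card (centr S x - {0}) = q ^ d - 1" using C0 finC d by (simp add: card_Diff_singleton)
    hence "card (orb S x) * (q ^ d - 1) = q ^ m - 1" using orbit_stab[OF S x(1)] cS0 by simp
    thus ?thesis using N(3)[of d "card (orb S x)"] \<open>d < m\<close> mdk by simp
  qed
  have orbsub: "orb S x \<subseteq> S - Z" if x: "x \<in> S" "x \<notin> Z" for x
  proof
    fix w assume "w \<in> orb S x"
    then obtain g where g: "g \<in> S" "g \<noteq> 0" "w = g * x * inverse g" unfolding orb_def by auto
    have wS: "w \<in> S" using g x Smul Sinv by simp
    have "w \<notin> Z"
    proof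
      assume wZ: "w \<in> Z"
      hence "g * w = w * g" using g Zmem by blast
      have "x = inverse g * w * g" using g by (simp add: mult.assoc)
      also have "\<dots> = inverse g * (g * w)" using \<open>g * w = w * g\<close> by (simp add: mult.assoc)
      also have "\<dots> = w" using g by simp
      finally show False using wZ x by simp
    qed
    thus "w \<in> S - Z" using wS by simp
  qed
  have self: "x \<in> orb S x" if "x \<in> S" for x
    unfolding orb_def using S(1) by (intro image_eqI[of _ _ 1]) (auto simp: subdiv_def)
  define Orbs where "Orbs = orb S ` (S - Z)"
  have U: "S - Z = \<Union>Orbs"
    unfolding Orbs_def using orbsub self by blast
  have "card (S - Z) = sum card Orbs"
    unfolding U
  proof (rule card_Union_disjoint)
    show "pairwise disjnt Orbs"
    proof (rule pairwiseI)
      fix A B assume AB: "A \<in> Orbs" "B \<in> Orbs" "A \<noteq> B"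
      then obtain x y where xy: "A = orb S x" "B = orb S y" by (auto simp: Orbs_def)
      show "disjnt A B"
      proof (rule ccontr)
        assume "\<not> disjnt A B"
        then obtain w where w: "w \<in> A" "w \<in> B" by (auto simp: disjnt_def)
        have "orb S w = A" using w(1) xy(1) orb_trans[OF S(1)] by simp
        moreover have "orb S w = B" using w(2) xy(2) orb_trans[OF S(1)] by simp
        ultimately show False using AB(3) by simp
      qed
    qed
    show "\<And>A. A \<in> Orbs \<Longrightarrow> finite A" using S(2) by (auto simp: Orbs_def orb_def)
  qed
  hence "int (card (S - Z)) = (\<Sum>X\<in>Orbs. int (card X))" by simp
  moreover have "N dvd (\<Sum>X\<in>Orbs. int (card X))"
    by (rule dvd_sum) (auto simp: Orbs_def intro: orbdvd)
  ultimately have "N dvd int (card (S - Z))" by simp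
  moreover have "card (S - Z) = q ^ m - q" using ZS finZ m q_def by (simp add: card_Diff_subset)
  moreover have "q \<le> q ^ m" using q2 m2 by (simp add: self_le_power)
  ultimately have "N dvd (int q ^ m - int q)" by (simp add: of_nat_diff)
  hence "N dvd ((int q ^ m - 1) - (int q ^ m - int q))" using N(2) by (rule dvd_diff[rotated])
  hence "N dvd (int q - 1)" by simp
  hence "\<bar>N\<bar> \<le> \<bar>int q - 1\<bar>" using q2 by (intro dvd_imp_le_int) auto
  thus False using N(1) q2 by simp
qed


definition twist :: "'a::ring_1 \<Rightarrow> 'a \<Rightarrow> 'a \<Rightarrow> 'a" where
  "twist a b y = a * y + y * b"

lemma twist_pow:
  fixes a b y :: "'a::ring_1"
  shows "(twist a b ^^ j) y = (\<Sum>k\<le>j. of_nat (j choose k) * (a ^ (j - k) * y * b ^ k))"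
proof (induction j)
  case 0 thus ?case by simp
next
  case (Suc n)
  define F where "F k = a ^ (Suc n - k) * y * b ^ k" for k
  have "(twist a b ^^ Suc n) y = a * (\<Sum>k\<le>n. of_nat (n choose k) * (a ^ (n - k) * y * b ^ k))
        + (\<Sum>k\<le>n. of_nat (n choose k) * (a ^ (n - k) * y * b ^ k)) * b"
  proof -
    have "(twist a b ^^ Suc n) y = twist a b ((twist a b ^^ n) y)" by simp
    also have "\<dots> = twist a b (\<Sum>k\<le>n. of_nat (n choose k) * (a ^ (n - k) * y * b ^ k))"
      by (simp only: Suc.IH)
    finally show ?thesis by (simp only: twist_def)
  qed
  also have "a * (\<Sum>k\<le>n. of_nat (n choose k) * (a ^ (n - k) * y * b ^ k)) = (\<Sum>k\<le>n. of_nat (n choose k) * F k)"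
    unfolding sum_distrib_left F_def
  proof (intro sum.cong refl)
    fix k assume "k \<in> {..n}"
    hence "Suc n - k = Suc (n - k)" by simp
    have "a * (of_nat (n choose k) * (a ^ (n - k) * y * b ^ k)) = (a * of_nat (n choose k)) * (a ^ (n - k) * y * b ^ k)"
      by (simp only: mult.assoc)
    also have "a * of_nat (n choose k) = of_nat (n choose k) * a" by (simp only: mult_of_nat_commute)
    finally show "a * (of_nat (n choose k) * (a ^ (n - k) * y * b ^ k)) = of_nat (n choose k) * (a ^ (Suc n - k) * y * b ^ k)"
      using \<open>Suc n - k = Suc (n - k)\<close> by (simp add: mult.assoc)
  qed
  also have "(\<Sum>k\<le>n. of_nat (n choose k) * (a ^ (n - k) * y * b ^ k)) * b = (\<Sum>k\<le>n. of_nat (n choose k) * F (Suc k))"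
    unfolding sum_distrib_right F_def by (intro sum.cong refl) (simp add: mult.assoc power_commutes)
  also have "(\<Sum>k\<le>n. of_nat (n choose k) * F (Suc k)) = (\<Sum>k\<in>{1..Suc n}. of_nat (n choose (k - 1)) * F k)"
    by (rule sum.reindex_bij_witness[of _ "\<lambda>k. k - 1" Suc]) auto
  also have "(\<Sum>k\<le>n. of_nat (n choose k) * F k) + (\<Sum>k\<in>{1..Suc n}. of_nat (n choose (k - 1)) * F k)
           = (\<Sum>k\<le>Suc n. of_nat (Suc n choose k) * F k)"
  proof -
    have A: "(\<Sum>k\<le>n. of_nat (n choose k) * F k) = (\<Sum>k\<le>Suc n. of_nat (n choose k) * F k)"
      by (simp add: binomial_eq_0)
    have B: "(\<Sum>k\<in>{1..Suc n}. of_nat (n choose (k - 1)) * F k) = (\<Sum>k\<le>Suc n. (if k = 0 then 0 else of_nat (n choose (k - 1))) * F k)"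
    proof -
      have "(\<Sum>k\<le>Suc n. (if k = 0 then 0 else of_nat (n choose (k - 1))) * F k)
          = (\<Sum>k\<in>{1..Suc n}. (if k = 0 then 0 else of_nat (n choose (k - 1))) * F k)"
        by (rule sum.mono_neutral_right) auto
      thus ?thesis by simp
    qed
    have C: "of_nat (Suc n choose k) = (of_nat (n choose k) + (if k = 0 then 0 else of_nat (n choose (k - 1))) :: 'a)" for k
      by (cases k) simp_all
    show ?thesis unfolding A B by (simp add: sum.distrib[symmetric] distrib_right C)
  qed
  finally show ?case by (simp add: F_def)
qed

lemma twist_one_pow:
  fixes a b :: "'a::ring_1"
  assumes ab: "a * b = b * a"
  shows "(twist a b ^^ j) 1 = (a + b) ^ j"
proof (induction j)
  case 0 thus ?case by simp
next
  case (Suc n)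
  have "b * (a + b) ^ n = (a + b) ^ n * b"
    by (rule power_commuting_commutes[symmetric]) (simp add: distrib_left distrib_right ab)
  thus ?case using Suc by (simp add: twist_def distrib_right)
qed

lemma comm_binom:
  fixes a b :: "'a::ring_1"
  assumes ab: "a * b = b * a"
  shows "(a + b) ^ j = (\<Sum>k\<le>j. of_nat (j choose k) * (a ^ (j - k) * b ^ k))"
  using twist_pow[where a=a and b=b and j=j and y=1] twist_one_pow[OF ab, of j] by simp

lemma sum_ends:
  fixes F :: "nat \<Rightarrow> 'a::comm_monoid_add"
  assumes "0 < p" "\<And>k. 0 < k \<Longrightarrow> k < p \<Longrightarrow> F k = 0"
  shows "(\<Sum>k\<le>p. F k) = F 0 + F p"
proof -
  have "(\<Sum>k\<le>p. F k) = (\<Sum>k\<in>{0, p}. F k)"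
    by (rule sum.mono_neutral_right) (use assms in auto)
  thus ?thesis using assms by simp
qed

lemma choose_char_zero:
  assumes "prime (CHAR('a::ring_1))" "0 < k" "k < CHAR('a)"
  shows "(of_nat (CHAR('a) choose k) :: 'a) = 0"
  using dvd_choose_prime[of k "CHAR('a)"] assms by (simp add: of_nat_eq_0_iff_char_dvd)

lemma twist_char:
  fixes a b y :: "'a::ring_1"
  assumes p: "prime (CHAR('a))"
  shows "(twist a b ^^ CHAR('a)) y = a ^ CHAR('a) * y + y * b ^ CHAR('a)"
proof -
  have "0 < CHAR('a)" using p by (simp add: prime_gt_0_nat)
  thus ?thesis unfolding twist_pow
    by (subst sum_ends) (auto simp: choose_char_zero[OF p])
qed

lemma frob_char:
  fixes a b :: "'a::ring_1"
  assumes p: "prime (CHAR('a))" and ab: "a * b = b * a"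
  shows "(a + b) ^ CHAR('a) = a ^ CHAR('a) + b ^ CHAR('a)"
  using twist_char[OF p, of a b 1] twist_one_pow[OF ab] by simp

lemma frob_pow:
  fixes a b :: "'a::ring_1"
  assumes p: "prime (CHAR('a))" and ab: "a * b = b * a"
  shows "(a + b) ^ (CHAR('a) ^ e) = a ^ (CHAR('a) ^ e) + b ^ (CHAR('a) ^ e)"
proof (induction e)
  case 0 thus ?case by simp
next
  case (Suc e)
  have c: "a ^ (CHAR('a) ^ e) * b ^ (CHAR('a) ^ e) = b ^ (CHAR('a) ^ e) * a ^ (CHAR('a) ^ e)"
    by (intro power_commuting_commutes ab[symmetric] power_commuting_commutes[symmetric])
  have "(a + b) ^ (CHAR('a) ^ Suc e) = ((a + b) ^ (CHAR('a) ^ e)) ^ CHAR('a)"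
    by (simp add: power_mult[symmetric] mult.commute)
  also have "\<dots> = (a ^ (CHAR('a) ^ e)) ^ CHAR('a) + (b ^ (CHAR('a) ^ e)) ^ CHAR('a)"
    unfolding Suc by (rule frob_char[OF p c])
  also have "\<dots> = a ^ (CHAR('a) ^ Suc e) + b ^ (CHAR('a) ^ Suc e)"
    by (simp add: power_mult[symmetric] mult.commute)
  finally show ?case .
qed

definition ad :: "'a::ring_1 \<Rightarrow> 'a \<Rightarrow> 'a" where
  "ad x y = x * y - y * x"

lemma ad_twist: "ad x = twist x (- x)"
  by (auto simp: ad_def twist_def fun_eq_iff)

lemma ad_char:
  fixes x :: "'a::ring_1"
  assumes p: "prime (CHAR('a))"
  shows "ad x ^^ CHAR('a) = ad (x ^ CHAR('a))"
proof
  fix y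
  have "(-x) ^ CHAR('a) = - (x ^ CHAR('a))" by (rule minus_power_prime_CHAR[OF refl p])
  thus "(ad x ^^ CHAR('a)) y = ad (x ^ CHAR('a)) y"
    unfolding ad_twist twist_char[OF p] by (simp add: twist_def)
qed

lemma ad_pow:
  fixes x :: "'a::ring_1"
  assumes p: "prime (CHAR('a))"
  shows "ad x ^^ (CHAR('a) ^ e) = ad (x ^ (CHAR('a) ^ e))"
proof (induction e)
  case 0 thus ?case by simp
next
  case (Suc e)
  have "ad x ^^ (CHAR('a) ^ Suc e) = (ad x ^^ (CHAR('a) ^ e)) ^^ CHAR('a)"
    by (simp add: funpow_mult mult.commute)
  also have "\<dots> = ad ((x ^ (CHAR('a) ^ e)) ^ CHAR('a))" unfolding Suc by (rule ad_char[OF p])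
  also have "(x ^ (CHAR('a) ^ e)) ^ CHAR('a) = x ^ (CHAR('a) ^ Suc e)"
    by (simp add: power_mult[symmetric] mult.commute)
  finally show ?case .
qed


lemma geom_comm:
  fixes t s :: "'a::ring_1"
  assumes ts: "t * s = s * t"
  shows "(t - s) * (\<Sum>a<k. t ^ a * s ^ (k - 1 - a)) = t ^ k - s ^ k"
proof (induction k)
  case 0 thus ?case by simp
next
  case (Suc k)
  define G where "G = (\<Sum>a<k. t ^ a * s ^ (k - 1 - a))"
  have sa: "s * t ^ a = t ^ a * s" for a by (rule power_commuting_commutes[OF ts, symmetric])
  have "(\<Sum>a<Suc k. t ^ a * s ^ (Suc k - 1 - a)) = (\<Sum>a<k. t ^ a * s ^ (k - a)) + t ^ k"
    by simp
  also have "(\<Sum>a<k. t ^ a * s ^ (k - a)) = s * G"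
    unfolding G_def sum_distrib_left
  proof (intro sum.cong refl)
    fix a assume "a \<in> {..<k}"
    hence "k - a = Suc (k - 1 - a)" by auto
    thus "t ^ a * s ^ (k - a) = s * (t ^ a * s ^ (k - 1 - a))"
      by (simp add: mult.assoc[symmetric] sa)
  qed
  finally have eq: "(\<Sum>a<Suc k. t ^ a * s ^ (Suc k - 1 - a)) = s * G + t ^ k" .
  have c: "(t - s) * s = s * (t - s)" using ts by (simp add: algebra_simps)
  have "(t - s) * (s * G + t ^ k) = s * ((t - s) * G) + (t - s) * t ^ k"
    by (simp add: distrib_left mult.assoc[symmetric] c)
  also have "(t - s) * G = t ^ k - s ^ k" using Suc by (simp add: G_def)
  also have "s * (t ^ k - s ^ k) + (t - s) * t ^ k = t ^ Suc k - s ^ Suc k"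
    by (simp add: algebra_simps sa power_commutes)
  finally show ?case using eq by simp
qed

lemma synth_div:
  fixes t t0 :: "'a::ring_1" and c :: "nat \<Rightarrow> 'a"
  assumes tt: "t * t0 = t0 * t"
  defines "D \<equiv> \<lambda>k a. (\<Sum>j\<in>{Suc a..<k}. t0 ^ (j - Suc a) * c j)"
  shows "(\<Sum>i<k. t ^ i * c i) - (\<Sum>i<k. t0 ^ i * c i) = (t - t0) * (\<Sum>a<k. t ^ a * D k a)"
proof (induction k)
  case 0 thus ?case by simp
next
  case (Suc k)
  have D1: "D (Suc k) a = D k a + (if a < k then t0 ^ (k - Suc a) * c k else 0)" for a
    unfolding D_def by (cases "a < k") auto
  have Dk: "D k k = 0" unfolding D_def by simp
  have "(\<Sum>a<Suc k. t ^ a * D (Suc k) a) = (\<Sum>a<Suc k. t ^ a * D k a) + (\<Sum>a<Suc k. t ^ a * (if a < k then t0 ^ (k - Suc a) * c k else 0))"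
    unfolding D1 by (simp add: distrib_left sum.distrib)
  also have "(\<Sum>a<Suc k. t ^ a * D k a) = (\<Sum>a<k. t ^ a * D k a)" using Dk by simp
  also have "(\<Sum>a<Suc k. t ^ a * (if a < k then t0 ^ (k - Suc a) * c k else 0)) = (\<Sum>a<k. t ^ a * t0 ^ (k - 1 - a)) * c k"
    by (simp add: sum_distrib_right mult.assoc)
  finally have "(t - t0) * (\<Sum>a<Suc k. t ^ a * D (Suc k) a) = (t - t0) * (\<Sum>a<k. t ^ a * D k a) + ((t - t0) * (\<Sum>a<k. t ^ a * t0 ^ (k - 1 - a))) * c k"
    by (simp add: distrib_left mult.assoc)
  also have "(t - t0) * (\<Sum>a<k. t ^ a * t0 ^ (k - 1 - a)) = t ^ k - t0 ^ k" by (rule geom_comm[OF tt])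
  also note Suc.IH[symmetric]
  finally show ?case by (simp add: algebra_simps)
qed

lemma vdm:
  fixes c :: "nat \<Rightarrow> 'a::division_ring"
  assumes "finite T" "\<And>s t. s \<in> T \<Longrightarrow> t \<in> T \<Longrightarrow> s * t = t * s" "k \<le> card T"
    "\<And>t. t \<in> T \<Longrightarrow> (\<Sum>i<k. t ^ i * c i) = 0"
  shows "\<forall>i<k. c i = 0"
  using assms
proof (induction k arbitrary: T c)
  case 0 thus ?case by simp
next
  case (Suc k)
  have "T \<noteq> {}" using Suc.prems(3) by auto
  then obtain t0 where t0: "t0 \<in> T" by blast
  define D where "D = (\<lambda>a. (\<Sum>j\<in>{Suc a..<Suc k}. t0 ^ (j - Suc a) * c j))"
  have p0: "(\<Sum>i<Suc k. t0 ^ i * c i) = 0" using Suc.prems(4) t0 by blast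
  have q0: "(\<Sum>a<k. t ^ a * D a) = 0" if t: "t \<in> T - {t0}" for t
  proof -
    have tt: "t * t0 = t0 * t" using Suc.prems(2) t t0 by blast
    have "(t - t0) * (\<Sum>a<Suc k. t ^ a * D a) = 0"
      using synth_div[OF tt, of c "Suc k"] Suc.prems(4) t p0 by (simp add: D_def)
    moreover have "t - t0 \<noteq> 0" using t by simp
    ultimately have "(\<Sum>a<Suc k. t ^ a * D a) = 0" by simp
    moreover have "D k = 0" by (simp add: D_def)
    ultimately show ?thesis by simp
  qed
  have Dz: "\<forall>a<k. D a = 0"
  proof (rule Suc.IH[of "T - {t0}"])
    show "finite (T - {t0})" using Suc.prems(1) by simp
    show "\<And>s t. s \<in> T - {t0} \<Longrightarrow> t \<in> T - {t0} \<Longrightarrow> s * t = t * s" using Suc.prems(2) by blast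
    show "k \<le> card (T - {t0})" using Suc.prems(1,3) t0 by simp
    show "\<And>t. t \<in> T - {t0} \<Longrightarrow> (\<Sum>a<k. t ^ a * D a) = 0" by (rule q0)
  qed
  have Drec: "D (a - 1) = c a + t0 * D a" if "0 < a" "a \<le> k" for a
  proof -
    have "D (a - 1) = (\<Sum>j\<in>{a..<Suc k}. t0 ^ (j - a) * c j)" using that by (simp add: D_def)
    also have "{a..<Suc k} = insert a {Suc a..<Suc k}" using that by auto
    also have "(\<Sum>j\<in>insert a {Suc a..<Suc k}. t0 ^ (j - a) * c j) = c a + (\<Sum>j\<in>{Suc a..<Suc k}. t0 ^ (j - a) * c j)"
      by simp
    also have "(\<Sum>j\<in>{Suc a..<Suc k}. t0 ^ (j - a) * c j) = t0 * D a"
      unfolding D_def sum_distrib_left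
    proof (intro sum.cong refl)
      fix j assume "j \<in> {Suc a..<Suc k}"
      hence "j - a = Suc (j - Suc a)" by auto
      thus "t0 ^ (j - a) * c j = t0 * (t0 ^ (j - Suc a) * c j)" by (simp add: mult.assoc)
    qed
    finally show ?thesis .
  qed
  have cpos: "c a = 0" if "0 < a" "a \<le> k" for a
  proof -
    have "D (a - 1) = 0" using Dz that by simp
    moreover have "a < k \<Longrightarrow> D a = 0" using Dz by simp
    moreover have "a = k \<Longrightarrow> D a = 0" by (simp add: D_def)
    ultimately show ?thesis using Drec[OF that] that by (cases "a < k") auto
  qed
  have "(\<Sum>i<Suc k. t0 ^ i * c i) = c 0"
  proof -
    have "(\<Sum>i<Suc k. t0 ^ i * c i) = (\<Sum>i\<in>{0}. t0 ^ i * c i)"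
      by (rule sum.mono_neutral_right) (auto simp: cpos)
    thus ?thesis by simp
  qed
  hence "c 0 = 0" using p0 by simp
  thus ?case using cpos by (metis less_Suc_eq_le neq0_conv)
qed


definition spn :: "'a::division_ring set \<Rightarrow> 'a \<Rightarrow> nat \<Rightarrow> 'a set" where
  "spn R x N = {y. \<exists>f. (\<forall>i. f i \<in> R) \<and> y = (\<Sum>i<N. f i * x ^ i)}"

lemma spn_finite:
  assumes "finite R"
  shows "finite (spn R x N)"
proof -
  have "spn R x N \<subseteq> (\<lambda>f. \<Sum>i<N. f i * x ^ i) ` (PiE {..<N} (\<lambda>_. R))"
  proof
    fix y assume "y \<in> spn R x N"
    then obtain f where f: "\<forall>i. f i \<in> R" "y = (\<Sum>i<N. f i * x ^ i)" by (auto simp: spn_def)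
    have "y = (\<Sum>i<N. restrict f {..<N} i * x ^ i)" using f(2) by simp
    moreover have "restrict f {..<N} \<in> PiE {..<N} (\<lambda>_. R)" using f(1) by auto
    ultimately show "y \<in> (\<lambda>f. \<Sum>i<N. f i * x ^ i) ` (PiE {..<N} (\<lambda>_. R))" by blast
  qed
  moreover have "finite (PiE {..<N} (\<lambda>_. R))" using assms by (simp add: finite_PiE)
  ultimately show ?thesis using finite_subset by blast
qed

locale spn_ctx =
  fixes R :: "'a::division_ring set" and x :: 'a and N :: nat
  assumes R0: "0 \<in> R" and R1: "1 \<in> R" and Radd: "\<And>a b. a \<in> R \<Longrightarrow> b \<in> R \<Longrightarrow> a + b \<in> R"
    and Rmul: "\<And>a b. a \<in> R \<Longrightarrow> b \<in> R \<Longrightarrow> a * b \<in> R"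
    and xN: "x ^ N = 1" and N0: "0 < N"
    and tw: "\<And>k j. k \<in> R \<Longrightarrow> \<exists>k'\<in>R. x ^ j * k = k' * x ^ j"
begin

abbreviation "Sp \<equiv> spn R x N"

lemma mono_pow: "k \<in> R \<Longrightarrow> k * x ^ j \<in> Sp"
proof -
  assume k: "k \<in> R"
  have xj: "x ^ j = x ^ (j mod N)"
  proof -
    have "x ^ j = x ^ (N * (j div N) + j mod N)" by simp
    also have "\<dots> = (x ^ N) ^ (j div N) * x ^ (j mod N)" by (simp only: power_add power_mult)
    finally show ?thesis using xN by simp
  qed
  define f where "f i = (if i = j mod N then k else 0)" for i
  have "(\<Sum>i<N. f i * x ^ i) = (\<Sum>i\<in>{j mod N}. f i * x ^ i)"
    by (rule sum.mono_neutral_right) (auto simp: f_def N0)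
  also have "\<dots> = k * x ^ j" using xj by (simp add: f_def)
  finally show ?thesis unfolding spn_def using k R0 by (auto simp: f_def intro!: exI[of _ f])
qed

lemma Sp_add: "y \<in> Sp \<Longrightarrow> z \<in> Sp \<Longrightarrow> y + z \<in> Sp"
proof -
  assume "y \<in> Sp" "z \<in> Sp"
  then obtain f g where f: "\<forall>i. f i \<in> R" "y = (\<Sum>i<N. f i * x ^ i)"
    and g: "\<forall>i. g i \<in> R" "z = (\<Sum>i<N. g i * x ^ i)" by (auto simp: spn_def)
  have "y + z = (\<Sum>i<N. (f i + g i) * x ^ i)" using f g by (simp add: sum.distrib distrib_right)
  moreover have "\<forall>i. f i + g i \<in> R" using f g Radd by blast
  ultimately show ?thesis unfolding spn_def by (intro CollectI exI[of _ "\<lambda>i. f i + g i"] conjI) auto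
qed

lemma Sp_0: "0 \<in> Sp"
  using mono_pow[OF R0, of 0] by simp

lemma Sp_sum: "(\<And>i. i \<in> A \<Longrightarrow> g i \<in> Sp) \<Longrightarrow> sum g A \<in> Sp"
proof (induction A rule: infinite_finite_induct)
  case (infinite A) thus ?case by (simp add: Sp_0)
next
  case empty thus ?case by (simp add: Sp_0)
next
  case (insert a A) thus ?case by (simp add: Sp_add)
qed

lemma R_sub: "R \<subseteq> Sp"
  using mono_pow[of _ 0] by auto

lemma x_in: "x \<in> Sp"
  using mono_pow[OF R1, of 1] by simp

lemma Sp_mul: "y \<in> Sp \<Longrightarrow> z \<in> Sp \<Longrightarrow> y * z \<in> Sp"
proof -
  assume "y \<in> Sp" "z \<in> Sp"
  then obtain f g where f: "\<forall>i. f i \<in> R" "y = (\<Sum>i<N. f i * x ^ i)"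
    and g: "\<forall>i. g i \<in> R" "z = (\<Sum>i<N. g i * x ^ i)" by (auto simp: spn_def)
  have "y * z = (\<Sum>i<N. \<Sum>j<N. (f i * x ^ i) * (g j * x ^ j))"
    by (simp only: f(2) g(2) sum_distrib_right) (simp only: sum_distrib_left)
  also have "\<dots> \<in> Sp"
  proof (intro Sp_sum)
    fix i j
    obtain k' where k': "k' \<in> R" "x ^ i * g j = k' * x ^ i" using tw g(1) by blast
    have "(f i * x ^ i) * (g j * x ^ j) = (f i * k') * x ^ (i + j)"
      by (simp add: mult.assoc power_add) (simp add: mult.assoc[symmetric] k'(2))
    thus "(f i * x ^ i) * (g j * x ^ j) \<in> Sp" using mono_pow Rmul f(1) k'(1) by simp
  qed
  finally show ?thesis .
qed

lemma Sp_1: "1 \<in> Sp" using R_sub R1 by blast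

lemma Sp_pow: "y \<in> Sp \<Longrightarrow> y ^ k \<in> Sp"
  by (induction k) (simp_all add: Sp_1 Sp_mul)

end


lemma prime_CHAR_dr:
  assumes "0 < CHAR('a::division_ring)"
  shows "prime (CHAR('a))"
proof -
  let ?p = "CHAR('a)"
  have p1: "1 < ?p" using assms CHAR_not_1 by (metis One_nat_def less_one nat_neq_iff)
  show ?thesis unfolding prime_nat_iff
  proof (intro conjI allI impI)
    show "1 < ?p" by (rule p1)
    fix d assume "d dvd ?p"
    then obtain e where e: "?p = d * e" by blast
    have "(of_nat d :: 'a) * of_nat e = 0" using e by (metis of_nat_CHAR of_nat_mult)
    hence "(of_nat d :: 'a) = 0 \<or> (of_nat e :: 'a) = 0" by simp
    hence "?p dvd d \<or> ?p dvd e" by (simp add: of_nat_eq_0_iff_char_dvd)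
    moreover have "d * e \<noteq> 0" using e p1 by linarith
    hence "d \<noteq> 0" "e \<noteq> 0" by auto
    ultimately have "?p \<le> d \<or> ?p \<le> e" by (auto dest: dvd_imp_le)
    moreover have "d \<le> ?p" "e \<le> ?p" using e \<open>d \<noteq> 0\<close> \<open>e \<noteq> 0\<close> by simp_all
    ultimately have "d = ?p \<or> e = ?p" by auto
    thus "d = 1 \<or> d = ?p" using e p1 by auto
  qed
qed

lemma char_split:
  assumes n: "0 < n"
  obtains q m where "n = q * m" "(of_nat m :: 'a::division_ring) \<noteq> 0"
    "\<And>a b :: 'a. a * b = b * a \<Longrightarrow> (a + b) ^ q = a ^ q + b ^ q"
    "q = 1 \<or> (prime (CHAR('a)) \<and> (\<exists>e. q = CHAR('a) ^ e))"
proof (cases "CHAR('a) = 0")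
  case True
  have "(of_nat n :: 'a) \<noteq> 0" using True n by (simp add: of_nat_eq_0_iff_char_dvd)
  show ?thesis
  proof (rule that[of 1 n])
    show "(of_nat n :: 'a) \<noteq> 0" by fact
  qed simp_all
next
  case False
  hence p: "prime (CHAR('a))" by (intro prime_CHAR_dr) simp
  let ?p = "CHAR('a)"
  have unit: "\<not> is_unit ?p" using p not_prime_unit by blast
  have n0: "n \<noteq> 0" using n by simp
  obtain m where m: "n = ?p ^ multiplicity ?p n * m" "\<not> ?p dvd m"
    by (rule multiplicity_decompose'[OF n0 unit])
  have "(of_nat m :: 'a) \<noteq> 0" using m(2) by (simp add: of_nat_eq_0_iff_char_dvd)
  show ?thesis
  proof (rule that[of "?p ^ multiplicity ?p n" m])
    show "n = ?p ^ multiplicity ?p n * m" by (rule m(1))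
    show "(of_nat m :: 'a) \<noteq> 0" by fact
    show "\<And>a b :: 'a. a * b = b * a \<Longrightarrow> (a + b) ^ (?p ^ multiplicity ?p n) = a ^ (?p ^ multiplicity ?p n) + b ^ (?p ^ multiplicity ?p n)"
      by (rule frob_pow[OF p])
    show "?p ^ multiplicity ?p n = 1 \<or> (prime ?p \<and> (\<exists>e. ?p ^ multiplicity ?p n = ?p ^ e))"
      using p by blast
  qed
qed

lemma ad_sum: "ad x (\<Sum>i\<in>A. f i) = (\<Sum>i\<in>A. ad x (f i))"
  unfolding ad_def by (simp add: sum_distrib_left sum_distrib_right sum_subtractf)

lemma ad_zero_funpow: "(ad x ^^ k) 0 = 0"
  by (induction k) (simp_all add: ad_def)

lemma case_inf:
  fixes n :: nat
  assumes n: "0 < n" and C: "\<And>x y::'a::division_ring. x ^ n * y = y * x ^ n"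
    and Zinf: "infinite {z::'a. \<forall>y. z * y = y * z}"
  shows "\<forall>x y::'a. x * y = y * x"
proof -
  define Z where "Z = {z::'a. \<forall>y. z * y = y * z}"
  obtain q m where qm: "n = q * m" "(of_nat m :: 'a) \<noteq> 0"
    "\<And>a b :: 'a. a * b = b * a \<Longrightarrow> (a + b) ^ q = a ^ q + b ^ q"
    "q = 1 \<or> (prime (CHAR('a)) \<and> (\<exists>e. q = CHAR('a) ^ e))"
    using char_split[OF n] by metis
  have q0: "0 < q" and m0: "0 < m" using qm(1) n by (auto intro: Nat.gr0I)
  have Zc: "z * y = y * z" if "z \<in> Z" for z y using that by (simp add: Z_def)
  have Zpow: "z ^ k \<in> Z" if "z \<in> Z" for z k
    unfolding Z_def
  proof (intro CollectI allI)
    fix y show "z ^ k * y = y * z ^ k" by (rule power_commuting_commutes) (rule Zc[OF that])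
  qed
  have stepA: "x ^ q * y = y * x ^ q" for x y :: 'a
  proof -
    define w where "w = x ^ q"
    have injq: "inj_on (\<lambda>c. c ^ q) Z"
    proof (rule inj_onI)
      fix c d assume cd: "c \<in> Z" "d \<in> Z" "c ^ q = d ^ q"
      have "(d + - d) ^ q = d ^ q + (- d) ^ q" by (rule qm(3)) simp
      hence "d ^ q + (- d) ^ q = 0" using q0 by (simp add: power_0_left)
      hence md: "(- d) ^ q = - (d ^ q)" by (metis add.commute eq_neg_iff_add_eq_0)
      have "(c + - d) ^ q = c ^ q + (- d) ^ q" by (rule qm(3)) (use Zc[OF cd(1), of "- d"] in simp)
      hence "(c - d) ^ q = 0" using md cd(3) by simp
      thus "c = d" by simp
    qed
    have T0inf: "infinite ((\<lambda>c. c ^ q) ` Z)"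
      using Zinf injq unfolding Z_def[symmetric] by (simp add: finite_image_iff)
    obtain T where T: "finite T" "card T = Suc m" "T \<subseteq> (\<lambda>c. c ^ q) ` Z"
      using infinite_arbitrarily_large[OF T0inf] by blast
    have TZ: "t \<in> Z" if "t \<in> T" for t using that T(3) Zpow by blast
    define cc where "cc k = of_nat (m choose k) * (w ^ (m - k) * y - y * w ^ (m - k))" for k
    have vanish: "(\<Sum>k<Suc m. t ^ k * cc k) = 0" if t: "t \<in> T" for t
    proof -
      obtain c where c: "c \<in> Z" "t = c ^ q" using t T(3) by blast
      have "(x + c) ^ q = x ^ q + c ^ q" by (rule qm(3)) (use Zc[OF c(1), of x] in simp)
      hence xc: "(x + c) ^ n = (w + t) ^ m" using qm(1) c(2) by (simp add: w_def power_mult)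
      have tz: "t ^ k \<in> Z" for k using TZ[OF t] Zpow by blast
      have wt: "w * t = t * w" using Zc[OF TZ[OF t]] by simp
      have bin: "(w + t) ^ m = (\<Sum>k\<le>m. t ^ k * (of_nat (m choose k) * w ^ (m - k)))"
        unfolding comm_binom[OF wt]
      proof (intro sum.cong refl)
        fix k
        have "of_nat (m choose k) * (w ^ (m - k) * t ^ k) = of_nat (m choose k) * (t ^ k * w ^ (m - k))"
          using Zc[OF tz[of k]] by simp
        also have "\<dots> = (of_nat (m choose k) * t ^ k) * w ^ (m - k)" by (simp only: mult.assoc)
        also have "of_nat (m choose k) * t ^ k = t ^ k * of_nat (m choose k)" by (rule mult_of_nat_commute)
        also have "(t ^ k * of_nat (m choose k)) * w ^ (m - k) = t ^ k * (of_nat (m choose k) * w ^ (m - k))"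
          by (simp only: mult.assoc)
        finally show "of_nat (m choose k) * (w ^ (m - k) * t ^ k) = t ^ k * (of_nat (m choose k) * w ^ (m - k))" .
      qed
      have "(\<Sum>k<Suc m. t ^ k * cc k) = (\<Sum>k\<le>m. t ^ k * (of_nat (m choose k) * w ^ (m - k))) * y
            - y * (\<Sum>k\<le>m. t ^ k * (of_nat (m choose k) * w ^ (m - k)))"
        unfolding lessThan_Suc_atMost sum_distrib_left sum_distrib_right sum_subtractf[symmetric]
      proof (intro sum.cong refl)
        fix k
        have yt: "y * t ^ k = t ^ k * y" using Zc[OF tz[of k], of y] by simp
        have yC: "y * of_nat (m choose k) = of_nat (m choose k) * y" by (rule mult_of_nat_commute[symmetric])
        have "y * (t ^ k * (of_nat (m choose k) * w ^ (m - k))) = (y * t ^ k) * (of_nat (m choose k) * w ^ (m - k))"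
          by (simp only: mult.assoc)
        also have "\<dots> = t ^ k * ((y * of_nat (m choose k)) * w ^ (m - k))" by (simp only: yt mult.assoc)
        also have "\<dots> = t ^ k * (of_nat (m choose k) * (y * w ^ (m - k)))" by (simp only: yC mult.assoc)
        finally have "y * (t ^ k * (of_nat (m choose k) * w ^ (m - k))) = t ^ k * (of_nat (m choose k) * (y * w ^ (m - k)))" .
        thus "t ^ k * cc k = t ^ k * (of_nat (m choose k) * w ^ (m - k)) * y - y * (t ^ k * (of_nat (m choose k) * w ^ (m - k)))"
          by (simp add: cc_def right_diff_distrib mult.assoc)
      qed
      also have "\<dots> = 0" using C[of "x + c" y] xc bin by simp
      finally show ?thesis .
    qed
    have "\<forall>k<Suc m. cc k = 0"
    proof (rule vdm[OF T(1)])
      show "\<And>s t. s \<in> T \<Longrightarrow> t \<in> T \<Longrightarrow> s * t = t * s" using TZ Zc by blast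
      show "Suc m \<le> card T" using T(2) by simp
      show "\<And>t. t \<in> T \<Longrightarrow> (\<Sum>k<Suc m. t ^ k * cc k) = 0" by (rule vanish)
    qed
    hence "cc (m - 1) = 0" using m0 by simp
    moreover have "m choose (m - 1) = m"
    proof -
      have "m choose (m - 1) = m choose (m - (m - 1))" by (rule binomial_symmetric) simp
      also have "m - (m - 1) = 1" using m0 by simp
      finally show ?thesis by simp
    qed
    moreover have "m - (m - 1) = 1" using m0 by simp
    ultimately have "(of_nat m :: 'a) * (w * y - y * w) = 0" by (simp add: cc_def)
    hence "w * y - y * w = 0" using qm(2) by simp
    thus ?thesis by (simp add: w_def)
  qed
  show ?thesis
  proof (cases "q = 1")
    case True thus ?thesis using stepA by simp
  next
    case False
    with qm(4) obtain e where p: "prime (CHAR('a))" and qe: "q = CHAR('a) ^ e" by blast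
    have adq: "ad x ^^ q = ad (x ^ q)" for x :: 'a unfolding qe by (rule ad_pow[OF p])
    have ad0: "(ad x ^^ q) y = 0" for x y :: 'a using adq stepA by (simp add: ad_def)
    show ?thesis
    proof (rule ccontr)
      assume "\<not> (\<forall>x y::'a. x * y = y * x)"
      then obtain a b :: 'a where ab: "a * b \<noteq> b * a" by blast
      define \<delta> where "\<delta> = ad a"
      define J where "J = {j. \<exists>y. (\<delta> ^^ j) y \<noteq> 0}"
      have J1: "1 \<in> J" using ab by (auto simp: J_def \<delta>_def ad_def intro!: exI[of _ b])
      have Jq: "j < q" if "j \<in> J" for j
      proof (rule ccontr)
        assume "\<not> j < q"
        then obtain r where r: "j = r + q" by (metis add.commute le_add_diff_inverse not_less)
        from that obtain y where "(\<delta> ^^ j) y \<noteq> 0" by (auto simp: J_def)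
        moreover have "(\<delta> ^^ j) y = (\<delta> ^^ r) ((\<delta> ^^ q) y)" by (simp add: r funpow_add)
        moreover have "(\<delta> ^^ q) y = 0" using ad0 by (simp add: \<delta>_def)
        ultimately show False by (simp add: \<delta>_def ad_zero_funpow)
      qed
      have finJ: "finite J" using Jq by (intro finite_subset[of J "{..<q}"]) auto
      define j0 where "j0 = Max J"
      have j0J: "j0 \<in> J" unfolding j0_def using finJ J1 by (intro Max_in) auto
      have j0ge: "1 \<le> j0" using finJ J1 by (simp add: j0_def)
      have notJ: "Suc j0 \<notin> J" using finJ j0_def by (metis Max_ge Suc_n_not_le_n)
      obtain y0 where y0: "(\<delta> ^^ j0) y0 \<noteq> 0" using j0J by (auto simp: J_def)
      define u where "u = (\<delta> ^^ (j0 - 1)) y0"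
      define w where "w = \<delta> u"
      have w_eq: "w = (\<delta> ^^ j0) y0"
      proof -
        have "j0 = Suc (j0 - 1)" using j0ge by simp
        hence "(\<delta> ^^ j0) y0 = (\<delta> ^^ Suc (j0 - 1)) y0" by (rule arg_cong)
        thus ?thesis by (simp add: w_def u_def)
      qed
      have w0: "w \<noteq> 0" using y0 w_eq by simp
      have "\<delta> w = 0" using notJ w_eq by (auto simp: J_def)
      hence aw: "a * w = w * a" by (simp add: \<delta>_def ad_def)
      have awi: "a * inverse w = inverse w * a"
      proof -
        have "a * inverse w = inverse w * (w * a) * inverse w" using w0 by (simp add: mult.assoc)
        also have "\<dots> = inverse w * (a * w) * inverse w" using aw by simp
        also have "\<dots> = inverse w * a" using w0 by (simp add: mult.assoc)
        finally show ?thesis .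
      qed
      define z where "z = inverse w * u"
      have az: "a * z - z * a = 1"
      proof -
        have "a * z - z * a = inverse w * (a * u - u * a)"
          unfolding z_def by (simp add: right_diff_distrib mult.assoc[symmetric] awi)
        also have "a * u - u * a = w" by (simp add: w_def \<delta>_def ad_def)
        finally show ?thesis using w0 by simp
      qed
      define v where "v = a * z"
      have vz: "ad v z = z"
      proof -
        have "ad v z = (a * z - z * a) * z" by (simp add: ad_def v_def left_diff_distrib mult.assoc)
        thus ?thesis using az by simp
      qed
      have "(ad v ^^ k) z = z" for k by (induction k) (simp_all add: vz)
      hence "z = 0" using ad0[of v z] by simp
      thus False using az by simp
    qed
  qed
qed


lemma inv_pow:
  fixes u :: "'a::division_ring"
  assumes "u ^ N = 1" "0 < N"
  shows "inverse u = u ^ (N - 1)"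
proof (rule inverse_unique)
  have "u * u ^ (N - 1) = u ^ Suc (N - 1)" by simp
  also have "Suc (N - 1) = N" using assms(2) by simp
  finally show "u * u ^ (N - 1) = 1" using assms(1) by simp
qed

context spn_ctx
begin

lemma Sp_subdiv:
  assumes unit: "\<And>u::'a. u \<noteq> 0 \<Longrightarrow> u ^ N = 1" and m1: "- 1 \<in> R"
  shows "subdiv Sp"
  unfolding subdiv_def
proof (intro conjI ballI)
  show "0 \<in> Sp" by (rule Sp_0)
  show "1 \<in> Sp" by (rule Sp_1)
next
  fix y z assume "y \<in> Sp" "z \<in> Sp"
  thus "y + z \<in> Sp" "y * z \<in> Sp" by (simp_all add: Sp_add Sp_mul)
next
  fix y assume y: "y \<in> Sp"
  have "(- 1) * y \<in> Sp" using Sp_mul[OF _ y] R_sub m1 by blast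
  thus "- y \<in> Sp" by simp
  show "inverse y \<in> Sp"
  proof (cases "y = 0")
    case True thus ?thesis using Sp_0 by simp
  next
    case False
    have "inverse y = y ^ (N - 1)" by (rule inv_pow[OF unit[OF False] N0])
    thus ?thesis using Sp_pow[OF y] by simp
  qed
qed

end

lemma conj_pow:
  fixes e x :: "'a::division_ring"
  assumes "e \<noteq> 0"
  shows "e * x ^ i * inverse e = (e * x * inverse e) ^ i"
proof (induction i)
  case 0 thus ?case using assms by simp
next
  case (Suc i)
  have "e * x ^ Suc i * inverse e = (e * x * inverse e) * (e * x ^ i * inverse e)"
    using assms by (simp add: mult.assoc)
  thus ?case using Suc by simp
qed

lemma conj_sum:
  fixes e :: "'a::division_ring"
  shows "e * (\<Sum>i\<in>A. f i) * inverse e = (\<Sum>i\<in>A. e * f i * inverse e)"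
  by (simp add: sum_distrib_left sum_distrib_right)

lemma case_fin:
  fixes n :: nat
  assumes n: "0 < n" and C: "\<And>x y::'a::division_ring. x ^ n * y = y * x ^ n"
    and Zfin: "finite {z::'a. \<forall>y. z * y = y * z}"
  shows "\<forall>x y::'a. x * y = y * x"
proof (rule ccontr)
  assume "\<not> (\<forall>x y::'a. x * y = y * x)"
  then obtain a b :: 'a where ab: "a * b \<noteq> b * a" by blast
  define Z where "Z = {z::'a. \<forall>y. z * y = y * z}"
  have finZ: "finite Z" using Zfin by (simp add: Z_def)
  have Zc: "z * y = y * z" if "z \<in> Z" for z y using that by (simp add: Z_def)
  have Z0: "0 \<in> Z" and Z1: "1 \<in> Z" by (simp_all add: Z_def)
  have Zadd: "y + z \<in> Z" if "y \<in> Z" "z \<in> Z" for y z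
    using Zc[OF that(1)] Zc[OF that(2)] by (simp add: Z_def distrib_left distrib_right)
  have Zmul: "y * z \<in> Z" if "y \<in> Z" "z \<in> Z" for y z
    unfolding Z_def
  proof (intro CollectI allI)
    fix w
    have "y * z * w = y * (w * z)" using Zc[OF that(2)] by (simp add: mult.assoc)
    also have "\<dots> = (y * w) * z" by (simp add: mult.assoc)
    also have "y * w = w * y" by (rule Zc[OF that(1)])
    finally show "y * z * w = w * (y * z)" by (simp add: mult.assoc)
  qed
  have Zneg: "- y \<in> Z" if "y \<in> Z" for y using Zc[OF that] by (simp add: Z_def)
  have Zinv: "inverse y \<in> Z" if "y \<in> Z" for y
    unfolding Z_def
  proof (intro CollectI allI)
    fix w
    show "inverse y * w = w * inverse y"
    proof (cases "y = 0")
      case False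
      have "inverse y * w = inverse y * (w * y) * inverse y" using False by (simp add: mult.assoc)
      also have "\<dots> = inverse y * (y * w) * inverse y" using Zc[OF that] by simp
      also have "\<dots> = w * inverse y" using False by (simp add: mult.assoc)
      finally show ?thesis .
    qed simp
  qed
  have ofnatZ: "of_nat k \<in> Z" for k by (simp add: Z_def mult_of_nat_commute)
  have "CHAR('a) \<noteq> 0"
  proof
    assume c0: "CHAR('a) = 0"
    have "range (of_nat :: nat \<Rightarrow> 'a) \<subseteq> Z" using ofnatZ by auto
    hence "finite (range (of_nat :: nat \<Rightarrow> 'a))" using finZ finite_subset by blast
    moreover have "inj (of_nat :: nat \<Rightarrow> 'a)"
    proof (rule injI)
      fix i j :: nat assume ij: "(of_nat i :: 'a) = of_nat j"
      show "i = j"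
      proof (rule ccontr)
        assume "i \<noteq> j"
        hence "i < j \<or> j < i" by auto
        thus False using ij c0 of_nat_eq_iff_char_dvd[where 'a='a, of i j] of_nat_eq_iff_char_dvd[where 'a='a, of j i] by auto
      qed
    qed
    ultimately have "finite (UNIV :: nat set)" using finite_imageD by blast
    thus False by simp
  qed
  hence p: "prime (CHAR('a))" by (intro prime_CHAR_dr) simp
  define p where "p = CHAR('a)"
  have p0: "0 < p" using p by (simp add: p_def prime_gt_0_nat)
  define Z0 where "Z0 = Z - {0}"
  have ferZ: "z ^ card Z0 = 1" if "z \<in> Z0" for z
  proof (rule fermat_sub[of Z0])
    show "finite Z0" using finZ by (simp add: Z0_def)
    show "1 \<in> Z0" using Z1 by (simp add: Z0_def)
    show "\<And>x y. x \<in> Z0 \<Longrightarrow> y \<in> Z0 \<Longrightarrow> x * y \<in> Z0" using Zmul by (simp add: Z0_def)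
    show "\<And>x y. x \<in> Z0 \<Longrightarrow> y \<in> Z0 \<Longrightarrow> x * y = y * x" using Zc by (simp add: Z0_def)
    show "0 \<notin> Z0" by (simp add: Z0_def)
    show "\<And>x. x \<in> Z0 \<Longrightarrow> inverse x \<in> Z0" using Zinv by (simp add: Z0_def)
    show "z \<in> Z0" by (rule that)
  qed
  define N where "N = n * card Z0"
  have cZ0: "0 < card Z0" using Z1 finZ by (auto simp: Z0_def card_gt_0_iff)
  have N0: "0 < N" using n cZ0 by (simp add: N_def)
  have unit: "u ^ N = 1" if "u \<noteq> 0" for u :: 'a
  proof -
    have "u ^ n \<in> Z0" using that C by (simp add: Z0_def Z_def)
    hence "(u ^ n) ^ card Z0 = 1" by (rule ferZ)
    thus ?thesis by (simp add: N_def power_mult)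
  qed
  have a0: "a \<noteq> 0" using ab by auto
  have aZ: "a \<notin> Z" using ab Zc by metis
  interpret K: spn_ctx Z a N
  proof
    show "0 \<in> Z" "1 \<in> Z" by (rule Z0, rule Z1)
    show "\<And>x y. x \<in> Z \<Longrightarrow> y \<in> Z \<Longrightarrow> x + y \<in> Z" by (rule Zadd)
    show "\<And>x y. x \<in> Z \<Longrightarrow> y \<in> Z \<Longrightarrow> x * y \<in> Z" by (rule Zmul)
    show "a ^ N = 1" by (rule unit[OF a0])
    show "0 < N" by (rule N0)
    show "\<And>k j. k \<in> Z \<Longrightarrow> \<exists>k'\<in>Z. a ^ j * k = k' * a ^ j" using Zc by metis
  qed
  define K where "K = spn Z a N"
  have finK: "finite K" using finZ by (simp add: K_def spn_finite)
  have subK: "subdiv K" unfolding K_def by (rule K.Sp_subdiv[OF unit]) (use Zneg Z1 in blast)+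
  have ZK: "Z \<subseteq> K" using K.R_sub by (simp add: K_def)
  have aK: "a \<in> K" using K.x_in by (simp add: K_def)
  have Kca: "y * a = a * y" if "y \<in> K" for y
  proof -
    have "y \<in> spn Z a N" using that by (simp add: K_def)
    then obtain f where f: "\<forall>i. f i \<in> Z" "y = (\<Sum>i<N. f i * a ^ i)" unfolding spn_def by blast
    have "y * a = (\<Sum>i<N. f i * a ^ i * a)" using f(2) by (simp add: sum_distrib_right)
    also have "\<dots> = (\<Sum>i<N. a * (f i * a ^ i))"
    proof (intro sum.cong refl)
      fix i
      have "f i * a ^ i * a = f i * (a * a ^ i)" by (simp add: mult.assoc power_commutes)
      also have "\<dots> = (f i * a) * a ^ i" by (simp add: mult.assoc)
      also have "f i * a = a * f i" by (rule Zc[OF f(1)[rule_format]])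
      finally show "f i * a ^ i * a = a * (f i * a ^ i)" by (simp add: mult.assoc)
    qed
    also have "\<dots> = a * y" using f(2) by (simp add: sum_distrib_left)
    finally show ?thesis .
  qed
  have Kcomm: "y * z = z * y" if "y \<in> K" "z \<in> K" for y z
  proof -
    have "z \<in> spn Z a N" using that(2) by (simp add: K_def)
    then obtain g where g: "\<forall>j. g j \<in> Z" "z = (\<Sum>j<N. g j * a ^ j)" unfolding spn_def by blast
    have ya: "y * a ^ j = a ^ j * y" for j by (rule power_commuting_commutes[symmetric]) (rule Kca[OF that(1), symmetric])
    have "y * z = (\<Sum>j<N. y * (g j * a ^ j))" using g(2) by (simp add: sum_distrib_left)
    also have "\<dots> = (\<Sum>j<N. (g j * a ^ j) * y)"
    proof (intro sum.cong refl)
      fix j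
      have "y * (g j * a ^ j) = (y * g j) * a ^ j" by (simp add: mult.assoc)
      also have "y * g j = g j * y" by (rule Zc[OF g(1)[rule_format], symmetric])
      also have "g j * y * a ^ j = g j * (a ^ j * y)" by (simp add: mult.assoc ya)
      finally show "y * (g j * a ^ j) = (g j * a ^ j) * y" by (simp add: mult.assoc)
    qed
    also have "\<dots> = z * y" using g(2) by (simp add: sum_distrib_right)
    finally show ?thesis .
  qed
  define P where "P = range (of_nat :: nat \<Rightarrow> 'a)"
  have ofnat_mod: "(of_nat k :: 'a) = of_nat (k mod p)" for k
  proof -
    have "(of_nat k :: 'a) = of_nat (p * (k div p) + k mod p)" by simp
    also have "\<dots> = of_nat p * of_nat (k div p) + of_nat (k mod p)" by (simp only: of_nat_add of_nat_mult)
    finally show ?thesis by (simp add: p_def)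
  qed
  have P_eq: "P = of_nat ` {..<p}"
  proof
    show "P \<subseteq> of_nat ` {..<p}"
    proof
      fix y assume "y \<in> P"
      then obtain k where "y = of_nat k" by (auto simp: P_def)
      hence "y = of_nat (k mod p)" using ofnat_mod by simp
      moreover have "k mod p < p" using p0 by simp
      ultimately show "y \<in> of_nat ` {..<p}" by blast
    qed
  qed (auto simp: P_def)
  have injP: "inj_on (of_nat :: nat \<Rightarrow> 'a) {..<p}"
  proof (rule inj_onI)
    fix i j assume ij: "i \<in> {..<p}" "j \<in> {..<p}" "(of_nat i :: 'a) = of_nat j"
    show "i = j"
    proof (rule ccontr)
      assume "i \<noteq> j"
      hence "i < j \<or> j < i" by auto
      thus False
      proof
        assume "i < j"
        hence "p dvd (j - i)" using ij(3) of_nat_eq_iff_char_dvd[where 'a='a, of i j] by (simp add: p_def)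
        moreover have "0 < j - i" "j - i < p" using \<open>i < j\<close> ij(2) by auto
        ultimately show False by (auto dest: dvd_imp_le)
      next
        assume "j < i"
        hence "p dvd (i - j)" using ij(3) of_nat_eq_iff_char_dvd[where 'a='a, of j i] by (simp add: p_def)
        moreover have "0 < i - j" "i - j < p" using \<open>j < i\<close> ij(1) by auto
        ultimately show False by (auto dest: dvd_imp_le)
      qed
    qed
  qed
  have cardP: "card P = p" using P_eq injP by (simp add: card_image)
  have finP: "finite P" using P_eq by simp
  have subP: "subdiv P"
    unfolding subdiv_def
  proof (intro conjI ballI)
    show "0 \<in> P" "1 \<in> P" unfolding P_def by (metis rangeI of_nat_0, metis rangeI of_nat_1)
  next
    fix y z assume "y \<in> P" "z \<in> P"
    then obtain i j where ij: "y = of_nat i" "z = of_nat j" by (auto simp: P_def)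
    show "y + z \<in> P" "y * z \<in> P" unfolding P_def ij by (metis rangeI of_nat_add, metis rangeI of_nat_mult)
  next
    fix y assume "y \<in> P"
    then obtain i where i: "y = of_nat i" by (auto simp: P_def)
    have "(of_nat i :: 'a) + of_nat ((p - 1) * i) = of_nat (p * i)"
    proof -
      have "i + (p - 1) * i = p * i" using p0 by (cases p) auto
      thus ?thesis by (metis of_nat_add)
    qed
    also have "\<dots> = 0" by (simp add: p_def)
    finally have "- (of_nat i :: 'a) = of_nat ((p - 1) * i)" by (rule minus_unique)
    hence "- y = of_nat ((p - 1) * i)" using i by simp
    thus "- y \<in> P" unfolding P_def by (metis rangeI)
    show "inverse y \<in> P"
    proof (cases "y = 0")
      case True
      have "inverse y = of_nat 0" using True by simp
      thus ?thesis unfolding P_def by (metis rangeI)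
    next
      case False
      have "inverse y = y ^ (N - 1)" by (rule inv_pow[OF unit[OF False] N0])
      also have "\<dots> = of_nat (i ^ (N - 1))" using i by simp
      finally show ?thesis unfolding P_def by (metis rangeI)
    qed
  qed
  have PK: "P \<subseteq> K" using ofnatZ ZK by (auto simp: P_def)
  obtain kk where cardK: "card K = p ^ kk" using kmod_card[OF subP finP kmod_sub[OF subP subK PK] finK] cardP by auto
  define r where "r = card K"
  have r2: "2 \<le> r" unfolding r_def by (rule subdiv_card_ge2[OF subK finK])
  define K0 where "K0 = K - {0}"
  have K00: "0 \<in> K" using subK by (simp add: subdiv_def)
  have cK0: "card K0 = r - 1" using K00 finK by (simp add: K0_def r_def card_Diff_singleton)
  have ferK: "t ^ (r - 1) = 1" if "t \<in> K0" for t
  proof -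
    have "t ^ card K0 = 1"
    proof (rule fermat_sub[of K0])
      show "finite K0" using finK by (simp add: K0_def)
      show "1 \<in> K0" using subK by (simp add: K0_def subdiv_def)
      show "\<And>x y. x \<in> K0 \<Longrightarrow> y \<in> K0 \<Longrightarrow> x * y \<in> K0" using subK by (simp add: K0_def subdiv_def)
      show "\<And>x y. x \<in> K0 \<Longrightarrow> y \<in> K0 \<Longrightarrow> x * y = y * x" using Kcomm by (simp add: K0_def)
      show "0 \<notin> K0" by (simp add: K0_def)
      show "\<And>x. x \<in> K0 \<Longrightarrow> inverse x \<in> K0" using subK by (simp add: K0_def subdiv_def)
      show "t \<in> K0" by (rule that)
    qed
    thus ?thesis using cK0 by simp
  qed
  have aK0: "a \<in> K0" using aK a0 by (simp add: K0_def)
  have ar: "a ^ r = a"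
  proof -
    have "a ^ r = a * a ^ (r - 1)" using r2 by (metis Suc_diff_1 le_trans one_le_numeral not_less_eq_eq power_Suc Suc_leI zero_less_Suc less_le_trans zero_less_numeral)
    thus ?thesis using ferK[OF aK0] by simp
  qed
  define \<delta> where "\<delta> = ad a"
  have \<delta>r: "\<delta> ^^ r = \<delta>" unfolding \<delta>_def r_def cardK p_def ad_pow[OF p] using ar by (simp add: r_def cardK p_def)
  define u where "u = \<delta> b"
  have u0: "u \<noteq> 0" using ab by (simp add: u_def \<delta>_def ad_def)
  define E where "E = r - 1"
  have E0: "0 < E" using r2 by (simp add: E_def)
  have \<delta>E: "(\<delta> ^^ E) u = u"
  proof -
    have "(\<delta> ^^ E) u = (\<delta> ^^ Suc E) b" by (simp add: u_def funpow_Suc_right del: funpow.simps)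
    also have "Suc E = r" using r2 by (simp add: E_def)
    finally show ?thesis using \<delta>r by (simp add: u_def)
  qed
  define ev where "ev t = (\<Sum>i<E. t ^ i * (\<delta> ^^ i) u)" for t
  have \<delta>lin: "\<delta> (t * v) = t * \<delta> v" if "t \<in> K" for t v
  proof -
    have "a * t = t * a" using Kca[OF that] by simp
    thus ?thesis by (simp add: \<delta>_def ad_def right_diff_distrib mult.assoc[symmetric])
  qed
  have Kpow: "t ^ i \<in> K" if "t \<in> K" for t i using K.Sp_pow that by (simp add: K_def)
  have eig: "t * \<delta> (ev t) = ev t" if t: "t \<in> K0" for t
  proof -
    have tK: "t \<in> K" using t by (simp add: K0_def)
    define g where "g i = t ^ i * (\<delta> ^^ i) u" for i
    have "\<delta> (ev t) = (\<Sum>i<E. t ^ i * (\<delta> ^^ Suc i) u)"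
      unfolding ev_def \<delta>_def ad_sum unfolding \<delta>_def[symmetric]
      by (intro sum.cong refl) (simp add: \<delta>lin[OF Kpow[OF tK]])
    hence "t * \<delta> (ev t) = (\<Sum>i<E. g (Suc i))"
      by (simp add: sum_distrib_left g_def mult.assoc)
    also have "\<dots> = (\<Sum>i<E. g i) + g E - g 0"
    proof -
      have h1: "(\<Sum>i<Suc E. g i) = g 0 + (\<Sum>i<E. g (Suc i))" by (rule sum.lessThan_Suc_shift)
      have h2: "(\<Sum>i<Suc E. g i) = (\<Sum>i<E. g i) + g E" by (rule sum.lessThan_Suc)
      show ?thesis using h1 h2 by (metis add.commute add_diff_cancel_right')
    qed
    also have "g E = u" using ferK[OF t] \<delta>E by (simp add: g_def E_def)
    also have "g 0 = u" by (simp add: g_def)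
    finally show ?thesis by (simp add: ev_def g_def)
  qed
  have "\<exists>t\<in>K0. ev t \<noteq> 0"
  proof (rule ccontr)
    assume "\<not> (\<exists>t\<in>K0. ev t \<noteq> 0)"
    hence allz: "\<And>t. t \<in> K0 \<Longrightarrow> (\<Sum>i<E. t ^ i * (\<delta> ^^ i) u) = 0" by (simp add: ev_def)
    have "\<forall>i<E. (\<delta> ^^ i) u = 0"
    proof (rule vdm[of K0])
      show "finite K0" using finK by (simp add: K0_def)
      show "\<And>s t. s \<in> K0 \<Longrightarrow> t \<in> K0 \<Longrightarrow> s * t = t * s" using Kcomm by (simp add: K0_def)
      show "E \<le> card K0" using cK0 by (simp add: E_def)
    qed (rule allz)
    hence "u = 0" using E0 by auto
    thus False using u0 by simp
  qed
  then obtain t where t: "t \<in> K0" "ev t \<noteq> 0" by blast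
  define e where "e = ev t"
  have e0: "e \<noteq> 0" using t by (simp add: e_def)
  define lam where "lam = inverse t"
  have t0: "t \<noteq> 0" using t by (simp add: K0_def)
  have lamK: "lam \<in> K" using t subK by (simp add: lam_def K0_def subdiv_def)
  have lam0: "lam \<noteq> 0" using t0 by (simp add: lam_def)
  have de: "\<delta> e = lam * e"
  proof -
    have "t * \<delta> e = e" using eig[OF t(1)] by (simp add: e_def)
    hence "inverse t * (t * \<delta> e) = inverse t * e" by simp
    thus ?thesis using t0 by (simp add: lam_def)
  qed
  have ea: "e * a * inverse e = a - lam"
  proof -
    have "a * e - e * a = lam * e" using de by (simp add: \<delta>_def ad_def)
    hence "e * a = (a - lam) * e" by (simp add: algebra_simps)
    thus ?thesis using e0 by (simp add: mult.assoc)
  qed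
  have conjK: "e * k * inverse e \<in> K" if k: "k \<in> K" for k
  proof -
    have "k \<in> spn Z a N" using k by (simp add: K_def)
    then obtain f where f: "\<forall>i. f i \<in> Z" "k = (\<Sum>i<N. f i * a ^ i)" unfolding spn_def by blast
    have "e * k * inverse e = (\<Sum>i<N. e * (f i * a ^ i) * inverse e)" using f(2) by (simp add: conj_sum)
    also have "\<dots> = (\<Sum>i<N. f i * (a - lam) ^ i)"
    proof (intro sum.cong refl)
      fix i
      have "e * (f i * a ^ i) * inverse e = f i * (e * a ^ i * inverse e)"
        using Zc[OF f(1)[rule_format, of i], of e] by (simp add: mult.assoc[symmetric])
      also have "e * a ^ i * inverse e = (a - lam) ^ i" using conj_pow[OF e0] ea by simp
      finally show "e * (f i * a ^ i) * inverse e = f i * (a - lam) ^ i" .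
    qed
    also have "\<dots> \<in> K"
    proof (rule K.Sp_sum[unfolded K_def[symmetric]])
      fix i
      have "a - lam \<in> K" using aK lamK subK unfolding subdiv_def by (metis diff_conv_add_uminus)
      hence "(a - lam) ^ i \<in> K" by (rule Kpow)
      moreover have "f i \<in> K" using ZK f(1) by blast
      ultimately show "f i * (a - lam) ^ i \<in> K" using subK by (simp add: subdiv_def)
    qed
    finally show ?thesis .
  qed
  have twe: "\<exists>k'\<in>K. e ^ j * k = k' * e ^ j" if k: "k \<in> K" for k j
  proof (induction j)
    case 0 thus ?case using k by auto
  next
    case (Suc j)
    then obtain k' where k': "k' \<in> K" "e ^ j * k = k' * e ^ j" by blast
    have "e ^ Suc j * k = e * (k' * e ^ j)" using k'(2) by (simp add: mult.assoc)
    also have "\<dots> = (e * k' * inverse e) * e ^ Suc j" using e0 by (simp add: mult.assoc)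
    finally show ?case using conjK[OF k'(1)] by blast
  qed
  interpret S: spn_ctx K e N
  proof
    show "0 \<in> K" "1 \<in> K" using subK by (simp_all add: subdiv_def)
    show "\<And>x y. x \<in> K \<Longrightarrow> y \<in> K \<Longrightarrow> x + y \<in> K" using subK by (simp add: subdiv_def)
    show "\<And>x y. x \<in> K \<Longrightarrow> y \<in> K \<Longrightarrow> x * y \<in> K" using subK by (simp add: subdiv_def)
    show "e ^ N = 1" by (rule unit[OF e0])
    show "0 < N" by (rule N0)
    show "\<And>k j. k \<in> K \<Longrightarrow> \<exists>k'\<in>K. e ^ j * k = k' * e ^ j" by (rule twe)
  qed
  define S where "S = spn K e N"
  have finS: "finite S" using finK by (simp add: S_def spn_finite)
  have subS: "subdiv S" unfolding S_def
  proof (rule S.Sp_subdiv[OF unit])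
    have "1 \<in> K" using subK by (simp add: subdiv_def)
    thus "- 1 \<in> K" using subK unfolding subdiv_def by blast
  qed
  have aS: "a \<in> S" using S.R_sub aK by (auto simp: S_def)
  have eS: "e \<in> S" using S.x_in by (simp add: S_def)
  have "a * e \<noteq> e * a"
  proof
    assume "a * e = e * a"
    hence "\<delta> e = 0" by (simp add: \<delta>_def ad_def)
    thus False using de lam0 e0 by simp
  qed
  thus False using wedderburn[OF subS finS] aS eS by blast
qed


theorem theorem2p1:
  fixes smul :: "'f::field \<Rightarrow> 'a::division_ring \<Rightarrow> 'a"
    and n :: nat
  assumes "algebra_over smul"
    and "\<not> (\<forall>x y :: 'a. x * y = y * x)"
    and "n > 0"
  shows "\<exists>\<alpha> \<beta> :: 'a. (\<alpha> * \<beta>) ^ n \<noteq> (\<beta> * \<alpha>) ^ n"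
proof (rule ccontr)
  assume "\<not> (\<exists>\<alpha> \<beta> :: 'a. (\<alpha> * \<beta>) ^ n \<noteq> (\<beta> * \<alpha>) ^ n)"
  hence H: "(\<alpha> * \<beta>) ^ n = (\<beta> * \<alpha>) ^ n" for \<alpha> \<beta> :: 'a by blast
  have C: "x ^ n * y = y * x ^ n" for x y :: 'a
  proof (cases "y = 0")
    case True thus ?thesis by simp
  next
    case False
    have "x ^ n = (x * inverse y * y) ^ n" using False by (simp add: mult.assoc)
    also have "\<dots> = (y * (x * inverse y)) ^ n" by (rule H)
    also have "\<dots> = (y * x * inverse y) ^ n" by (simp add: mult.assoc)
    also have "\<dots> = y * x ^ n * inverse y" by (rule conj_pow[OF False, symmetric])
    finally have "x ^ n * y = y * x ^ n * inverse y * y" by simp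
    thus ?thesis using False by (simp add: mult.assoc)
  qed
  have "\<forall>x y :: 'a. x * y = y * x"
  proof (cases "finite {z::'a. \<forall>y. z * y = y * z}")
    case True thus ?thesis using case_fin[OF assms(3) C] by blast
  next
    case False thus ?thesis using case_inf[OF assms(3) C] by blast
  qed
  thus False using assms(2) by blast
qed


end
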